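(* Let $N\ge1$ and $\mathtt{SNR}=\infty$. Then $$\frac{\mathbb E\!\left[\sum_{n=1}^N\frac{\mathsf g_n}{\mathsf I_n}\right]}{\mathbb E\!\left[\max\left\{\frac{\mathsf g_1}{\mathsf I_1},\dots,\frac{\mathsf g_N}{\mathsf I_N}\right\}\right]}\le\frac{N\,\mathbb E[\mathsf g_1]}{\mathbb E[\max\{\mathsf g_1,\dots,\mathsf g_N\}]}.$$ In particular, for Rayleigh fading ($m_{\mathrm D}=m_{\mathrm I}=1$) the ratio of mean post-combiner SINR of MRC to that of selection combining is at most $N\left(\sum_{n=1}^N\frac1n\right)^{-1}$, the corresponding ratio in the interference-free case.
   Context: Let $\Phi=\{\mathsf x_i\}_{i\ge0}$ be a homogeneous Poisson point process on $\mathbb R^2$ of intensity $\lambda>0$. A receiver with $N$ antennas is at the origin; the desired transmitter is at distance $d>0$; $\alpha>2$. $\mathsf g_1,\dots,\mathsf g_N$ are i.i.d. Gamma with shape $m_{\mathrm D}$ (a positive integer) and scale $1/m_{\mathrm D}$; $\mathsf h_{n,i}$ are i.i.d. Gamma with shape $m_{\mathrm I}>0$ and scale $1/m_{\mathrm I}$; all mutually independent and independent of $\Phi$. $\mathsf I_n=d^{\alpha}\sum_i\mathsf h_{n,i}\|\mathsf x_i\|^{-\alpha}$ (all $\mathsf I_n$ share the same point process $\Phi$ and are identically distributed). The numerator is the mean post-combiner SINR of MRC and the denominator the mean SINR of selection combining (which picks the branch with largest $\mathsf g_n/\mathsf I_n$). *)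

theory Defs
  imports "HOL-Probability.Probability"
begin

definition gamma_density :: "real \<Rightarrow> real \<Rightarrow> real \<Rightarrow> real" where
  "gamma_density k \<theta> t =
     (if 0 < t then t powr (k - 1) * exp (- t / \<theta>) / (Gamma k * \<theta> powr k) else 0)"

text \<open>A random point configuration in the plane, given by an enumeration of its points.
  Number of points in a set B.\<close>
definition pcount :: "(nat \<Rightarrow> 'a \<Rightarrow> real^2) \<Rightarrow> (real^2) set \<Rightarrow> 'a \<Rightarrow> nat" where
  "pcount x B \<omega> = card {i. x i \<omega> \<in> B}"

definition is_ppp :: "'a measure \<Rightarrow> real \<Rightarrow> (nat \<Rightarrow> 'a \<Rightarrow> real^2) \<Rightarrow> bool" where
  "is_ppp M lam x \<longleftrightarrow>
     (\<forall>i. x i \<in> borel_measurable M) \<and>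
     (AE \<omega> in M. inj (\<lambda>i. x i \<omega>) \<and> (\<forall>B. bounded B \<longrightarrow> finite {i. x i \<omega> \<in> B})) \<and>
     (\<forall>B k. B \<in> sets borel \<and> bounded B \<longrightarrow>
        measure M {\<omega> \<in> space M. pcount x B \<omega> = k} =
          (lam * measure lborel B) ^ k / fact k * exp (- (lam * measure lborel B))) \<and>
     (\<forall>(B :: nat \<Rightarrow> (real^2) set) J. finite J \<and> (\<forall>j\<in>J. B j \<in> sets borel \<and> bounded (B j))
        \<and> disjoint_family_on B J \<longrightarrow>
        prob_space.indep_vars M (\<lambda>_. count_space UNIV) (\<lambda>j \<omega>. pcount x (B j) \<omega>) J)"

definition interf :: "real \<Rightarrow> real \<Rightarrow> (nat \<Rightarrow> nat \<Rightarrow> 'a \<Rightarrow> real) \<Rightarrow> (nat \<Rightarrow> 'a \<Rightarrow> real^2)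
                      \<Rightarrow> nat \<Rightarrow> 'a \<Rightarrow> real" where
  "interf d \<alpha> h x n \<omega> = d powr \<alpha> * (\<Sum>i. h n i \<omega> * norm (x i \<omega>) powr (- \<alpha>))"

end

theory Submission
  imports Defs "HOL-Real_Asymp.Real_Asymp"
begin

lemma (in prob_space) indep_vars_reindex:
  assumes inj: "inj_on f I" and ind: "indep_vars M' X (f ` I)"
  shows "indep_vars (\<lambda>i. M' (f i)) (\<lambda>i. X (f i)) I"
  unfolding indep_vars_def2
proof safe
  fix i assume "i \<in> I" then show "random_variable (M' (f i)) (X (f i))"
    using ind by (auto simp: indep_vars_def2)
next
  have S: "indep_sets (\<lambda>k. {X k -` A \<inter> space M |A. A \<in> sets (M' k)}) (f ` I)"
    using ind by (auto simp: indep_vars_def2)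
  show "indep_sets (\<lambda>i. {X (f i) -` A \<inter> space M |A. A \<in> sets (M' (f i))}) I"
  proof (rule indep_setsI)
    fix i assume "i \<in> I"
    then show "{X (f i) -` A \<inter> space M |A. A \<in> sets (M' (f i))} \<subseteq> events"
      using S unfolding indep_sets_def by blast
  next
    fix J A assume J: "J \<noteq> {}" "J \<subseteq> I" "finite J"
      and A: "\<forall>j\<in>J. A j \<in> {X (f j) -` A \<inter> space M |A. A \<in> sets (M' (f j))}"
    define A' where "A' k = A (the_inv_into I f k)" for k
    have inJ: "inj_on f J" using inj J by (metis inj_on_subset)
    have tv: "j \<in> J \<Longrightarrow> the_inv_into I f (f j) = j" for j
      using inj J by (meson subsetD the_inv_into_f_f)
    have "prob (\<Inter>k\<in>f ` J. A' k) = (\<Prod>k\<in>f ` J. prob (A' k))"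
      by (rule indep_setsD[OF S]) (use J A in \<open>auto simp: A'_def tv\<close>)
    moreover have "(\<Inter>k\<in>f ` J. A' k) = (\<Inter>j\<in>J. A j)" by (auto simp: A'_def tv)
    moreover have "(\<Prod>k\<in>f ` J. prob (A' k)) = (\<Prod>j\<in>J. prob (A j))"
      by (subst prod.reindex[OF inJ]) (auto simp: A'_def tv)
    ultimately show "prob (\<Inter>j\<in>J. A j) = (\<Prod>j\<in>J. prob (A j))" by simp
  qed
qed


lemma (in prob_space) indep_set_mono2:
  assumes "indep_set A B" "A' \<subseteq> A" "B' \<subseteq> B"
  shows "indep_set A' B'"
  using assms unfolding indep_sets2_eq by blast

lemma (in prob_space) indep_var_from_sets:
  fixes U V :: "'a \<Rightarrow> real"
  assumes ind: "indep_set SA SB"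
    and sa: "sigma_algebra (space M) SA" and sb: "sigma_algebra (space M) SB"
    and U: "\<And>A. A \<in> sets borel \<Longrightarrow> U -` A \<inter> space M \<in> SA"
    and V: "\<And>A. A \<in> sets borel \<Longrightarrow> V -` A \<inter> space M \<in> SB"
  shows "indep_var borel U borel V"
proof -
  have ev: "SA \<subseteq> events" "SB \<subseteq> events" using ind unfolding indep_sets2_eq by auto
  have rU: "random_variable borel U"
    by (rule measurableI) (use U ev in auto)
  have rV: "random_variable borel V"
    by (rule measurableI) (use V ev in auto)
  have "sigma_sets (space M) {U -` A \<inter> space M |A. A \<in> sets borel} \<subseteq> SA"
    by (rule sigma_algebra.sigma_sets_subset[OF sa]) (use U in auto)
  moreover have "sigma_sets (space M) {V -` A \<inter> space M |A. A \<in> sets borel} \<subseteq> SB"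
    by (rule sigma_algebra.sigma_sets_subset[OF sb]) (use V in auto)
  ultimately show ?thesis
    unfolding indep_var_eq using rU rV indep_set_mono2[OF ind] by blast
qed

lemma preimage_in_sigma:
  assumes "Gen \<subseteq> Pow \<Omega>" "U \<in> borel_measurable (sigma \<Omega> Gen)" "A \<in> sets borel"
  shows "U -` A \<inter> \<Omega> \<in> sigma_sets \<Omega> Gen"
  using measurable_sets[OF assms(2,3)] assms(1) by (simp add: sets_measure_of space_measure_of)

lemma (in prob_space) indep_var_nn_integral:
  fixes U V :: "'a \<Rightarrow> real"
  assumes ind: "indep_var borel U borel V" and U0: "\<And>\<omega>. 0 \<le> U \<omega>" and V0: "\<And>\<omega>. 0 \<le> V \<omega>"
  shows "(\<integral>\<^sup>+\<omega>. ennreal (U \<omega> * V \<omega>) \<partial>M) = (\<integral>\<^sup>+\<omega>. U \<omega> \<partial>M) * (\<integral>\<^sup>+\<omega>. V \<omega> \<partial>M)"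
proof -
  have bb: "(\<lambda>_. borel) = case_bool borel borel" by (rule ext) (simp split: bool.split)
  have i1: "indep_vars (\<lambda>_. borel) (case_bool U V) UNIV"
    using ind unfolding indep_var_def bb .
  have i2: "indep_vars (\<lambda>_. borel) (\<lambda>i \<omega>. ennreal (case_bool U V i \<omega>)) UNIV"
    by (rule indep_vars_compose2[OF i1]) auto
  have "(\<integral>\<^sup>+\<omega>. (\<Prod>i\<in>UNIV. ennreal (case_bool U V i \<omega>)) \<partial>M) = (\<Prod>i\<in>UNIV. \<integral>\<^sup>+\<omega>. ennreal (case_bool U V i \<omega>) \<partial>M)"
    by (rule indep_vars_nn_integral[OF _ i2]) auto
  then show ?thesis using U0 V0 by (simp add: UNIV_bool mult.commute ennreal_mult)
qed


lemma sigma_sets_Int2: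
  assumes "A \<subseteq> Pow sp" "a \<in> sigma_sets sp A" "b \<in> sigma_sets sp A"
  shows "a \<inter> b \<in> sigma_sets sp A"
proof -
  interpret sigma_algebra sp "sigma_sets sp A" using sigma_algebra_sigma_sets[OF assms(1)] .
  show ?thesis using assms(2,3) by (rule Int)
qed

lemma Int_stable_sigma_sets:
  assumes "A \<subseteq> Pow sp" shows "Int_stable (sigma_sets sp A)"
  using sigma_sets_Int2[OF assms] unfolding Int_stable_def by blast


locale mimo = prob_space M for M :: "'a measure" +
  fixes N :: nat and x :: "nat \<Rightarrow> 'a \<Rightarrow> real^2"
    and g :: "nat \<Rightarrow> 'a \<Rightarrow> real" and h :: "nat \<Rightarrow> nat \<Rightarrow> 'a \<Rightarrow> real"
  assumes N1: "N \<ge> 1"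
    and xmeas: "\<And>i. x i \<in> borel_measurable M"
    and gh_indep: "indep_vars (\<lambda>_. borel)
        (\<lambda>k \<omega>. case k of Inl n \<Rightarrow> g n \<omega> | Inr (n, i) \<Rightarrow> h n i \<omega>)
        (Inl ` {1..N} \<union> Inr ` ({1..N} \<times> UNIV))"
    and x_indep: "indep_set
        (sigma_sets (space M) {(\<lambda>\<omega> i. x i \<omega>) -` A \<inter> space M | A.
            A \<in> sets (Pi\<^sub>M UNIV (\<lambda>_. borel))})
        (sigma_sets (space M) {(\<lambda>\<omega>. restrict (\<lambda>k. case k of Inl n \<Rightarrow> g n \<omega> | Inr (n, i) \<Rightarrow> h n i \<omega>)
                 (Inl ` {1..N} \<union> Inr ` ({1..N} \<times> UNIV))) -` A \<inter> space M | A.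
            A \<in> sets (Pi\<^sub>M (Inl ` {1..N} \<union> Inr ` ({1..N} \<times> UNIV)) (\<lambda>_. borel))})"
begin

abbreviation "Ind \<equiv> Inl ` {1..N} \<union> Inr ` ({1..N} \<times> (UNIV::nat set))"
abbreviation "GHf \<equiv> (\<lambda>k \<omega>. case k of Inl n \<Rightarrow> g n \<omega> | Inr (n, i) \<Rightarrow> h n i \<omega>)"

definition "Gen_g = (\<Union>n\<in>{1..N}. {g n -` A \<inter> space M | A. A \<in> sets borel})"
definition "Gen_h = (\<Union>p\<in>{1..N}\<times>UNIV. {h (fst p) (snd p) -` A \<inter> space M | A. A \<in> sets borel})"
definition "SX = sigma_sets (space M) {(\<lambda>\<omega> i. x i \<omega>) -` A \<inter> space M | A.
            A \<in> sets (Pi\<^sub>M UNIV (\<lambda>_. borel))}"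
definition "SGH = sigma_sets (space M) {(\<lambda>\<omega>. restrict (\<lambda>k. GHf k \<omega>) Ind) -` A \<inter> space M | A.
            A \<in> sets (Pi\<^sub>M Ind (\<lambda>_. borel))}"
definition "Bset = {a \<inter> c | a c. a \<in> SX \<and> c \<in> sigma_sets (space M) Gen_h}"

lemma gmeas: "n \<in> {1..N} \<Longrightarrow> g n \<in> borel_measurable M"
  using gh_indep unfolding indep_vars_def2 by (auto dest!: bspec[of _ _ "Inl n"])

lemma hmeas: "n \<in> {1..N} \<Longrightarrow> h n i \<in> borel_measurable M"
  using gh_indep unfolding indep_vars_def2 by (auto dest!: bspec[of _ _ "Inr (n,i)"])

lemma Gen_g_Pow: "Gen_g \<subseteq> Pow (space M)" by (auto simp: Gen_g_def)
lemma Gen_h_Pow: "Gen_h \<subseteq> Pow (space M)" by (auto simp: Gen_h_def)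

lemma x_indep': "indep_set SX SGH" using x_indep unfolding SX_def SGH_def .

lemma SX_events: "SX \<subseteq> events" and SGH_events: "SGH \<subseteq> events"
  using x_indep' unfolding indep_sets2_eq by auto

lemma SGH_sa: "sigma_algebra (space M) SGH"
  unfolding SGH_def by (rule sigma_algebra_sigma_sets) auto
lemma SX_sa: "sigma_algebra (space M) SX"
  unfolding SX_def by (rule sigma_algebra_sigma_sets) auto

lemma GH_pre:
  assumes "k \<in> Ind" "A \<in> sets borel"
  shows "GHf k -` A \<inter> space M \<in> SGH"
proof -
  let ?R = "(\<lambda>\<omega>. restrict (\<lambda>k. GHf k \<omega>) Ind)"
  let ?B = "(\<lambda>f. f k) -` A \<inter> space (Pi\<^sub>M Ind (\<lambda>_. borel))"
  have "?B \<in> sets (Pi\<^sub>M Ind (\<lambda>_. borel))"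
    using measurable_sets[OF measurable_component_singleton[OF assms(1)] assms(2)] by simp
  moreover have "GHf k -` A \<inter> space M = ?R -` ?B \<inter> space M"
    using assms(1) by (auto simp: space_PiM PiE_iff)
  ultimately show ?thesis unfolding SGH_def by blast
qed

lemma SG_sub: "sigma_sets (space M) Gen_g \<subseteq> SGH"
proof (rule sigma_algebra.sigma_sets_subset[OF SGH_sa])
  show "Gen_g \<subseteq> SGH"
  proof
    fix a assume "a \<in> Gen_g"
    then obtain n A where "n \<in> {1..N}" "A \<in> sets borel" "a = g n -` A \<inter> space M"
      unfolding Gen_g_def by blast
    then show "a \<in> SGH" using GH_pre[of "Inl n" A] by auto
  qed
qed

lemma SH_sub: "sigma_sets (space M) Gen_h \<subseteq> SGH"
proof (rule sigma_algebra.sigma_sets_subset[OF SGH_sa])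
  show "Gen_h \<subseteq> SGH"
  proof
    fix a assume "a \<in> Gen_h"
    then obtain n i A where "n \<in> {1..N}" "A \<in> sets borel" "a = h n i -` A \<inter> space M"
      unfolding Gen_h_def by auto
    then show "a \<in> SGH" using GH_pre[of "Inr (n,i)" A] by auto
  qed
qed

lemma indep_GH: "indep_set (sigma_sets (space M) Gen_g) (sigma_sets (space M) Gen_h)"
proof -
  define E where "E k = sigma_sets (space M) {GHf k -` A \<inter> space M | A. A \<in> sets borel}" for k
  define Kb where "Kb = case_bool (Inl ` {1..N}) (Inr ` ({1..N} \<times> (UNIV::nat set)))"
  have iv: "indep_sets E Ind"
    using gh_indep unfolding indep_vars_def E_def by blast
  have U: "(\<Union>j\<in>UNIV. Kb j) = Ind" by (auto simp: Kb_def UNIV_bool)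
  have c: "indep_sets (\<lambda>j. sigma_sets (space M) (\<Union>k\<in>Kb j. E k)) UNIV"
  proof (rule indep_sets_collect_sigma)
    show "indep_sets E (\<Union>j\<in>UNIV. Kb j)" using iv U by simp
    show "Int_stable (E i)" for i unfolding E_def by (rule Int_stable_sigma_sets) auto
    show "disjoint_family_on Kb UNIV"
      by (auto simp: disjoint_family_on_def Kb_def split: bool.split)
  qed
  have s1: "sigma_sets (space M) Gen_g \<subseteq> sigma_sets (space M) (\<Union>k\<in>Kb True. E k)"
    apply (rule sigma_sets_subseteq)
    by (auto simp: Gen_g_def Kb_def E_def)
  have s2: "sigma_sets (space M) Gen_h \<subseteq> sigma_sets (space M) (\<Union>k\<in>Kb False. E k)"
    apply (rule sigma_sets_subseteq)
    apply (auto simp: Gen_h_def Kb_def E_def)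
    apply (rule_tac x=a in bexI)
     apply (rule_tac x=b in exI)
    by auto
  show ?thesis
    unfolding indep_set_def
    apply (rule indep_sets_mono_sets[OF c])
    using s1 s2 by (auto split: bool.split)
qed

end

context mimo begin

lemma SH_events: "sigma_sets (space M) Gen_h \<subseteq> events"
  using indep_GH unfolding indep_sets2_eq by auto
lemma SG_events: "sigma_sets (space M) Gen_g \<subseteq> events"
  using SG_sub SGH_events by auto

lemma SX_top: "space M \<in> SX" unfolding SX_def by (rule sigma_sets_top)

lemma Bset_Pow: "Bset \<subseteq> Pow (space M)"
  using SX_events sets.sets_into_space by (auto simp: Bset_def)

lemma SGH_Int: "a \<in> SGH \<Longrightarrow> b \<in> SGH \<Longrightarrow> a \<inter> b \<in> SGH"
  unfolding SGH_def by (rule sigma_sets_Int2) auto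
lemma SX_Int: "a \<in> SX \<Longrightarrow> b \<in> SX \<Longrightarrow> a \<inter> b \<in> SX"
  unfolding SX_def by (rule sigma_sets_Int2) auto

lemma indep_main: "indep_set (sigma_sets (space M) Gen_g) (sigma_sets (space M) Bset)"
proof -
  let ?SG = "sigma_sets (space M) Gen_g" and ?SH = "sigma_sets (space M) Gen_h"
  have ib: "indep_set ?SG Bset"
    unfolding indep_sets2_eq
  proof (intro conjI ballI)
    show "?SG \<subseteq> events" by (rule SG_events)
    show "Bset \<subseteq> events" using SX_events SH_events by (auto simp: Bset_def)
    fix b e assume b: "b \<in> ?SG" and e: "e \<in> Bset"
    then obtain a c where a: "a \<in> SX" and c: "c \<in> ?SH" and e': "e = a \<inter> c"
      unfolding Bset_def by blast
    have bc: "b \<inter> c \<in> SGH" using SGH_Int SG_sub SH_sub b c by blast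
    have cG: "c \<in> SGH" using SH_sub c by blast
    have 1: "prob (b \<inter> e) = prob (a \<inter> (b \<inter> c))" unfolding e' by (simp add: Int_ac)
    have 2: "prob (a \<inter> (b \<inter> c)) = prob a * prob (b \<inter> c)"
      using x_indep' a bc unfolding indep_sets2_eq by blast
    have 3: "prob (b \<inter> c) = prob b * prob c"
      using indep_GH b c unfolding indep_sets2_eq by blast
    have 4: "prob (a \<inter> c) = prob a * prob c"
      using x_indep' a cG unfolding indep_sets2_eq by blast
    show "prob (b \<inter> e) = prob b * prob e" using 1 2 3 4 e' by (simp add: ac_simps)
  qed
  have "Int_stable Bset"
    unfolding Int_stable_def Bset_def
  proof safe
    fix a c a' c' assume "a \<in> SX" "c \<in> ?SH" "a' \<in> SX" "c' \<in> ?SH"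
    then show "\<exists>a'' c''. a \<inter> c \<inter> (a' \<inter> c') = a'' \<inter> c'' \<and> a'' \<in> SX \<and> c'' \<in> ?SH"
      by (intro exI[of _ "a \<inter> a'"] exI[of _ "c \<inter> c'"])
         (auto intro: SX_Int sigma_sets_Int2[OF Gen_h_Pow])
  qed
  from indep_set_sigma_sets[OF ib Int_stable_sigma_sets[OF Gen_g_Pow] this]
  show ?thesis by (simp add: sigma_sets_sigma_sets_eq[OF Gen_g_Pow])
qed

lemma g_meas_G: "n \<in> {1..N} \<Longrightarrow> g n \<in> borel_measurable (sigma (space M) Gen_g)"
proof (rule measurableI)
  fix A :: "real set" assume A: "A \<in> sets borel" and n: "n \<in> {1..N}"
  have "g n -` A \<inter> space M \<in> sigma_sets (space M) Gen_g"
    using A n unfolding Gen_g_def by (intro sigma_sets.Basic) force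
  then show "g n -` A \<inter> space (sigma (space M) Gen_g) \<in> sets (sigma (space M) Gen_g)"
    by (simp add: sets_measure_of[OF Gen_g_Pow] space_measure_of[OF Gen_g_Pow])
qed auto

lemma h_meas_B: "n \<in> {1..N} \<Longrightarrow> h n i \<in> borel_measurable (sigma (space M) Bset)"
proof (rule measurableI)
  fix A :: "real set" assume A: "A \<in> sets borel" and n: "n \<in> {1..N}"
  have "h n i -` A \<inter> space M \<in> sigma_sets (space M) Gen_h"
    using A n unfolding Gen_h_def by (intro sigma_sets.Basic) force
  then have "space M \<inter> (h n i -` A \<inter> space M) \<in> Bset"
    unfolding Bset_def using SX_top by blast
  then show "h n i -` A \<inter> space (sigma (space M) Bset) \<in> sets (sigma (space M) Bset)"
    by (auto simp: sets_measure_of[OF Bset_Pow] space_measure_of[OF Bset_Pow] Int_absorb1 Int_commute)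
qed auto

lemma x_meas_B: "x i \<in> borel_measurable (sigma (space M) Bset)"
proof (rule measurableI)
  fix A :: "(real^2) set" assume A: "A \<in> sets borel"
  let ?B = "(\<lambda>f. f i) -` A \<inter> space (Pi\<^sub>M (UNIV::nat set) (\<lambda>_. borel))"
  have "?B \<in> sets (Pi\<^sub>M UNIV (\<lambda>_. borel))"
    using measurable_sets[OF measurable_component_singleton[of i UNIV] A] by simp
  moreover have "x i -` A \<inter> space M = (\<lambda>\<omega> i. x i \<omega>) -` ?B \<inter> space M"
    by (auto simp: space_PiM)
  ultimately have "x i -` A \<inter> space M \<in> SX" unfolding SX_def by blast
  then have "(x i -` A \<inter> space M) \<inter> space M \<in> Bset"
    unfolding Bset_def using sigma_sets_top by blast
  then show "x i -` A \<inter> space (sigma (space M) Bset) \<in> sets (sigma (space M) Bset)"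
    by (auto simp: sets_measure_of[OF Bset_Pow] space_measure_of[OF Bset_Pow])
qed auto

lemma indep_GB:
  fixes U V :: "'a \<Rightarrow> real"
  assumes "U \<in> borel_measurable (sigma (space M) Gen_g)" "V \<in> borel_measurable (sigma (space M) Bset)"
  shows "indep_var borel U borel V"
  by (rule indep_var_from_sets[OF indep_main sigma_algebra_sigma_sets[OF Gen_g_Pow]
        sigma_algebra_sigma_sets[OF Bset_Pow]])
     (auto intro: preimage_in_sigma[OF Gen_g_Pow] preimage_in_sigma[OF Bset_Pow] assms)

end

locale mimo2 = mimo +
  fixes fg :: "real \<Rightarrow> ennreal"
  assumes g_distr: "\<And>n. n \<in> {1..N} \<Longrightarrow> distributed M lborel (g n) fg"
begin

lemma g_indep: "indep_vars (\<lambda>_. borel) g {1..N}"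
proof -
  have "indep_vars (\<lambda>_. borel) GHf (Inl ` {1..N})"
    by (rule indep_vars_subset[OF gh_indep]) auto
  from indep_vars_reindex[of Inl "{1..N}", OF _ this]
  show ?thesis by (simp add: inj_on_def)
qed

lemma distr_g: "n \<in> {1..N} \<Longrightarrow> distr M borel (g n) = density lborel fg"
proof -
  assume n: "n \<in> {1..N}"
  have "distr M borel (g n) = distr M lborel (g n)" by (rule distr_cong) auto
  also have "\<dots> = density lborel fg" using distributed_distr_eq_density[OF g_distr[OF n]] .
  finally show ?thesis .
qed

lemma distr_vec:
  assumes ind: "indep_vars (\<lambda>_. borel) Z {1..N}"
    and Z: "\<And>n. n \<in> {1..N} \<Longrightarrow> distr M borel (Z n) = density lborel fg"
  shows "distr M (Pi\<^sub>M {1..N} (\<lambda>_. borel)) (\<lambda>\<omega>. \<lambda>n\<in>{1..N}. Z n \<omega>) = Pi\<^sub>M {1..N} (\<lambda>_. density lborel fg)"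
proof -
  define Z' where "Z' n = (if n \<in> {1..N} then Z n else (\<lambda>_. 0::real))" for n
  have rv: "random_variable borel (Z' n)" for n
    using ind by (auto simp: Z'_def indep_vars_def)
  have ind': "indep_vars (\<lambda>_. borel) Z' {1..N}"
    using ind by (rule indep_vars_cong[THEN iffD1, rotated 3]) (auto simp: Z'_def)
  have ne: "{1..N} \<noteq> {}" using N1 by auto
  have "distr M (Pi\<^sub>M {1..N} (\<lambda>_. borel)) (\<lambda>\<omega>. \<lambda>n\<in>{1..N}. Z n \<omega>) =
        distr M (Pi\<^sub>M {1..N} (\<lambda>_. borel)) (\<lambda>\<omega>. \<lambda>n\<in>{1..N}. Z' n \<omega>)"
    by (rule distr_cong) (auto simp: Z'_def)
  also have "\<dots> = Pi\<^sub>M {1..N} (\<lambda>n. distr M borel (Z' n))"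
    using indep_vars_iff_distr_eq_PiM[OF ne rv] ind' by simp
  also have "\<dots> = Pi\<^sub>M {1..N} (\<lambda>_. density lborel fg)"
    by (rule PiM_cong) (auto simp: Z'_def Z)
  finally show ?thesis .
qed

lemma exch:
  fixes F :: "(nat \<Rightarrow> real) \<Rightarrow> ennreal"
  assumes tau: "bij_betw \<tau> {1..N} {1..N}"
    and F: "F \<in> borel_measurable (Pi\<^sub>M {1..N} (\<lambda>_. borel))"
  shows "(\<integral>\<^sup>+\<omega>. F (\<lambda>n\<in>{1..N}. g (\<tau> n) \<omega>) \<partial>M) = (\<integral>\<^sup>+\<omega>. F (\<lambda>n\<in>{1..N}. g n \<omega>) \<partial>M)"
proof -
  have i1: "indep_vars (\<lambda>_. borel) (\<lambda>n. g (\<tau> n)) {1..N}"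
    using indep_vars_reindex[of \<tau> "{1..N}" "\<lambda>_. borel" g] tau g_indep
    by (simp add: bij_betw_def)
  have m1: "(\<lambda>\<omega>. \<lambda>n\<in>{1..N}. g (\<tau> n) \<omega>) \<in> measurable M (Pi\<^sub>M {1..N} (\<lambda>_. borel))"
    using tau by (intro measurable_restrict gmeas) (auto simp: bij_betw_def)
  have m2: "(\<lambda>\<omega>. \<lambda>n\<in>{1..N}. g n \<omega>) \<in> measurable M (Pi\<^sub>M {1..N} (\<lambda>_. borel))"
    using gmeas by (auto intro!: measurable_restrict)
  have d1: "distr M (Pi\<^sub>M {1..N} (\<lambda>_. borel)) (\<lambda>\<omega>. \<lambda>n\<in>{1..N}. g (\<tau> n) \<omega>) = Pi\<^sub>M {1..N} (\<lambda>_. density lborel fg)"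
    by (rule distr_vec[OF i1], rule distr_g) (use tau in \<open>auto simp: bij_betw_def\<close>)
  have d2: "distr M (Pi\<^sub>M {1..N} (\<lambda>_. borel)) (\<lambda>\<omega>. \<lambda>n\<in>{1..N}. g n \<omega>) = Pi\<^sub>M {1..N} (\<lambda>_. density lborel fg)"
    by (rule distr_vec[OF g_indep]) (use distr_g in auto)
  have "(\<integral>\<^sup>+\<omega>. F (\<lambda>n\<in>{1..N}. g (\<tau> n) \<omega>) \<partial>M) = (\<integral>\<^sup>+v. F v \<partial>distr M (Pi\<^sub>M {1..N} (\<lambda>_. borel)) (\<lambda>\<omega>. \<lambda>n\<in>{1..N}. g (\<tau> n) \<omega>))"
    by (rule nn_integral_distr[symmetric, OF m1]) (use F in simp)
  also have "\<dots> = (\<integral>\<^sup>+v. F v \<partial>distr M (Pi\<^sub>M {1..N} (\<lambda>_. borel)) (\<lambda>\<omega>. \<lambda>n\<in>{1..N}. g n \<omega>))"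
    unfolding d1 d2 ..
  also have "\<dots> = (\<integral>\<^sup>+\<omega>. F (\<lambda>n\<in>{1..N}. g n \<omega>) \<partial>M)"
    by (rule nn_integral_distr[OF m2]) (use F in simp)
  finally show ?thesis .
qed

end

definition mxv :: "nat set \<Rightarrow> (nat \<Rightarrow> real) \<Rightarrow> real" where
  "mxv I v = Max ((\<lambda>n. max 0 (v n)) ` I)"
definition wsv :: "nat set \<Rightarrow> nat \<Rightarrow> (nat \<Rightarrow> real) \<Rightarrow> real" where
  "wsv I k v = (if max 0 (v k) = mxv I v then 1 else 0) / (\<Sum>j\<in>I. if max 0 (v j) = mxv I v then 1 else 0)"
definition Fkv :: "nat set \<Rightarrow> nat \<Rightarrow> (nat \<Rightarrow> real) \<Rightarrow> real" where
  "Fkv I k v = wsv I k v * mxv I v"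

lemma wsv_nonneg: "0 \<le> wsv I k v" by (simp add: wsv_def sum_nonneg)
lemma mxv_nonneg: "finite I \<Longrightarrow> I \<noteq> {} \<Longrightarrow> 0 \<le> mxv I v"
  unfolding mxv_def by (meson Max_ge_iff finite_imageI image_is_empty max.cobounded1 ex_in_conv imageI)
lemma Fkv_nonneg: "finite I \<Longrightarrow> I \<noteq> {} \<Longrightarrow> 0 \<le> Fkv I k v"
  by (simp add: Fkv_def wsv_nonneg mxv_nonneg)

lemma wsv_sum: assumes "finite I" "I \<noteq> {}" shows "(\<Sum>k\<in>I. wsv I k v) = 1"
proof -
  have "mxv I v \<in> (\<lambda>n. max 0 (v n)) ` I"
    unfolding mxv_def using assms by (intro Max_in) auto
  then obtain j where j: "j \<in> I" "max 0 (v j) = mxv I v" by auto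
  have pos: "(\<Sum>j\<in>I. if max 0 (v j) = mxv I v then 1 else 0 :: real) > 0"
    using j assms by (intro sum_pos2[of _ j]) auto
  show ?thesis unfolding wsv_def using pos by (simp add: sum_divide_distrib[symmetric])
qed

lemma Fkv_sum: assumes "finite I" "I \<noteq> {}" shows "(\<Sum>k\<in>I. Fkv I k v) = mxv I v"
  unfolding Fkv_def sum_distrib_right[symmetric] wsv_sum[OF assms] by simp

lemma Fkv_le:
  assumes "finite I" "I \<noteq> {}" and y: "\<And>k. k \<in> I \<Longrightarrow> 0 \<le> y k"
  shows "(\<Sum>k\<in>I. Fkv I k v * y k) \<le> Max ((\<lambda>k. max 0 (v k) * y k) ` I)"
proof -
  let ?Mx = "Max ((\<lambda>k. max 0 (v k) * y k) ` I)"
  have "Fkv I k v * y k \<le> wsv I k v * ?Mx" if k: "k \<in> I" for k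
  proof (cases "max 0 (v k) = mxv I v")
    case True
    then have "Fkv I k v * y k = wsv I k v * (max 0 (v k) * y k)" by (simp add: Fkv_def)
    also have "\<dots> \<le> wsv I k v * ?Mx"
      using k assms by (intro mult_left_mono wsv_nonneg) (auto intro!: Max_ge)
    finally show ?thesis .
  next
    case False then show ?thesis by (simp add: Fkv_def wsv_def)
  qed
  then have "(\<Sum>k\<in>I. Fkv I k v * y k) \<le> (\<Sum>k\<in>I. wsv I k v * ?Mx)" by (rule sum_mono)
  also have "\<dots> = ?Mx" using wsv_sum[OF assms(1,2)] by (simp add: sum_distrib_right[symmetric])
  finally show ?thesis .
qed

lemma Fkv_perm:
  assumes tau: "bij_betw \<tau> I I" and j: "j \<in> I"
  shows "Fkv I j (\<lambda>n\<in>I. v (\<tau> n)) = Fkv I (\<tau> j) (\<lambda>n\<in>I. v n)"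
proof -
  have tj: "\<tau> j \<in> I" using tau j by (auto simp: bij_betw_def)
  have im: "\<tau> ` I = I" using tau by (simp add: bij_betw_def)
  have m: "mxv I (\<lambda>n\<in>I. v (\<tau> n)) = mxv I (\<lambda>n\<in>I. v n)"
  proof -
    have "(\<lambda>n. max 0 ((\<lambda>n\<in>I. v (\<tau> n)) n)) ` I = (\<lambda>n. max 0 ((\<lambda>n\<in>I. v n) n)) ` (\<tau> ` I)"
      using im by (force simp: image_iff)
    then show ?thesis unfolding mxv_def im by simp
  qed
  have s: "(\<Sum>i\<in>I. if max 0 ((\<lambda>n\<in>I. v (\<tau> n)) i) = mxv I (\<lambda>n\<in>I. v n) then 1 else 0 :: real) =
           (\<Sum>i\<in>I. if max 0 ((\<lambda>n\<in>I. v n) i) = mxv I (\<lambda>n\<in>I. v n) then 1 else 0)"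
  proof -
    have "(\<Sum>i\<in>I. if max 0 ((\<lambda>n\<in>I. v n) i) = mxv I (\<lambda>n\<in>I. v n) then 1 else 0 :: real) =
          (\<Sum>i\<in>I. if max 0 ((\<lambda>n\<in>I. v n) (\<tau> i)) = mxv I (\<lambda>n\<in>I. v n) then 1 else 0)"
      by (rule sum.reindex_bij_betw[OF tau, symmetric])
    also have "\<dots> = (\<Sum>i\<in>I. if max 0 ((\<lambda>n\<in>I. v (\<tau> n)) i) = mxv I (\<lambda>n\<in>I. v n) then 1 else 0)"
      using tau by (intro sum.cong) (auto simp: bij_betw_def)
    finally show ?thesis by simp
  qed
  show ?thesis
    unfolding Fkv_def wsv_def m s using j tj by simp
qed


lemma bij_swap1: assumes "k \<in> I" "j \<in> I"
  shows "bij_betw (\<lambda>n. if n = j then k else if n = k then j else n) I I"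
  by (rule bij_betwI[where g="\<lambda>n. if n = j then k else if n = k then j else n"]) (use assms in auto)

locale mimo3 = mimo2 +
  fixes d \<alpha> :: real
  assumes gpos: "AE \<omega> in M. \<forall>n\<in>{1..N}. 0 \<le> g n \<omega>"
    and Ipos: "AE \<omega> in M. \<forall>k\<in>{1..N}. 0 \<le> interf d \<alpha> h x k \<omega>"
    and G0: "(\<integral>\<^sup>+t. fg t * ennreal t \<partial>lborel) = 1"
begin

definition "Yr k \<omega> = max 0 (1 / interf d \<alpha> h x k \<omega>)"
definition "gv \<omega> = (\<lambda>n\<in>{1..N}. g n \<omega>)"

lemma Yr_nonneg: "0 \<le> Yr k \<omega>" by (simp add: Yr_def)

lemma Yr_meas_B: assumes k: "k \<in> {1..N}" shows "Yr k \<in> borel_measurable (sigma (space M) Bset)"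
proof -
  have [measurable]: "h k i \<in> borel_measurable (sigma (space M) Bset)" for i using h_meas_B[OF k] .
  note x_meas_B[measurable]
  show ?thesis unfolding Yr_def interf_def by measurable
qed

lemma Yr_meas: assumes k: "k \<in> {1..N}" shows "Yr k \<in> borel_measurable M"
proof -
  have [measurable]: "h k i \<in> borel_measurable M" for i using hmeas[OF k] .
  note xmeas[measurable]
  show ?thesis unfolding Yr_def interf_def by measurable
qed

lemma interf_meas: assumes k: "k \<in> {1..N}" shows "interf d \<alpha> h x k \<in> borel_measurable M"
proof -
  have [measurable]: "h k i \<in> borel_measurable M" for i using hmeas[OF k] .
  note xmeas[measurable]
  show ?thesis unfolding interf_def by measurable
qed

lemma gv_meas_G: "gv \<in> measurable (sigma (space M) Gen_g) (Pi\<^sub>M {1..N} (\<lambda>_. borel))"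
  unfolding gv_def by (intro measurable_restrict g_meas_G)

lemma gv_meas: "gv \<in> measurable M (Pi\<^sub>M {1..N} (\<lambda>_. borel))"
  unfolding gv_def by (intro measurable_restrict gmeas)

lemma Fkv_meas: assumes k: "k \<in> {1..N}" shows "Fkv {1..N} k \<in> borel_measurable (Pi\<^sub>M {1..N} (\<lambda>_. borel))"
proof -
  have [measurable]: "(\<lambda>v. v n) \<in> borel_measurable (Pi\<^sub>M {1..N} (\<lambda>_. borel))" if "n \<in> {1..N}" for n
    using that by measurable
  have mx[measurable]: "mxv {1..N} \<in> borel_measurable (Pi\<^sub>M {1..N} (\<lambda>_. borel))"
    unfolding mxv_def by measurable
  have [measurable]: "(\<lambda>v. v k) \<in> borel_measurable (Pi\<^sub>M {1..N} (\<lambda>_. borel))" using k by measurable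
  show ?thesis unfolding Fkv_def wsv_def by measurable
qed

end

lemma div_helper:
  fixes a b c :: real assumes c: "0 < c" and a: "0 \<le> a" and le: "c * a \<le> b"
  shows "a / b \<le> 1 / c"
proof (cases "a = 0")
  case False
  then have ap: "a > 0" using a by simp
  then have "0 < c * a" using c by simp
  then have "a / b \<le> a / (c * a)" using le ap by (intro divide_left_mono) auto
  also have "\<dots> = 1 / c" using ap by simp
  finally show ?thesis .
qed (use c in simp)

lemma ennreal_max0: "ennreal (max 0 x) = ennreal x"
  by (cases "x \<ge> 0") (auto simp: ennreal_neg max_def)

context mimo3 begin

lemma Eg: "k \<in> {1..N} \<Longrightarrow> (\<integral>\<^sup>+\<omega>. ennreal (g k \<omega>) \<partial>M) = 1"
  using distributed_nn_integral[OF g_distr, of k "\<lambda>t. ennreal t"] G0 by simp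

lemma E_gY: assumes k: "k \<in> {1..N}"
  shows "(\<integral>\<^sup>+\<omega>. ennreal (max 0 (g k \<omega>) * Yr k \<omega>) \<partial>M) = (\<integral>\<^sup>+\<omega>. Yr k \<omega> \<partial>M)"
proof -
  have "indep_var borel (\<lambda>\<omega>. max 0 (g k \<omega>)) borel (Yr k)"
    by (rule indep_GB) (use g_meas_G[OF k] Yr_meas_B[OF k] in measurable)
  from indep_var_nn_integral[OF this] show ?thesis
    using Eg[OF k] by (simp add: Yr_nonneg ennreal_max0)
qed

lemma E_FY: assumes k: "k \<in> {1..N}"
  shows "(\<integral>\<^sup>+\<omega>. ennreal (Fkv {1..N} k (gv \<omega>) * Yr k \<omega>) \<partial>M) =
     (\<integral>\<^sup>+\<omega>. Fkv {1..N} k (gv \<omega>) \<partial>M) * (\<integral>\<^sup>+\<omega>. Yr k \<omega> \<partial>M)"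
proof -
  have "indep_var borel (\<lambda>\<omega>. Fkv {1..N} k (gv \<omega>)) borel (Yr k)"
    by (rule indep_GB) (use measurable_compose[OF gv_meas_G Fkv_meas[OF k]] Yr_meas_B[OF k] in auto)
  from indep_var_nn_integral[OF this] show ?thesis
    using N1 by (simp add: Yr_nonneg Fkv_nonneg)
qed

lemma E_F_eq: assumes k: "k \<in> {1..N}"
  shows "(\<integral>\<^sup>+\<omega>. Fkv {1..N} k (gv \<omega>) \<partial>M) = (\<integral>\<^sup>+\<omega>. Fkv {1..N} 1 (gv \<omega>) \<partial>M)"
proof -
  define \<tau> where "\<tau> = (\<lambda>n::nat. if n = 1 then k else if n = k then 1 else n)"
  have tau: "bij_betw \<tau> {1..N} {1..N}" unfolding \<tau>_def by (rule bij_swap1) (use k N1 in auto)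
  have 1: "1 \<in> {1..N}" using N1 by auto
  have "(\<integral>\<^sup>+\<omega>. ennreal (Fkv {1..N} 1 (\<lambda>n\<in>{1..N}. g (\<tau> n) \<omega>)) \<partial>M) = (\<integral>\<^sup>+\<omega>. ennreal (Fkv {1..N} 1 (\<lambda>n\<in>{1..N}. g n \<omega>)) \<partial>M)"
    by (rule exch[OF tau]) (rule measurable_compose[OF Fkv_meas[OF 1]], simp)
  moreover have "Fkv {1..N} 1 (\<lambda>n\<in>{1..N}. g (\<tau> n) \<omega>) = Fkv {1..N} k (gv \<omega>)" for \<omega>
  proof -
    have "Fkv {1..N} 1 (\<lambda>n\<in>{1..N}. g (\<tau> n) \<omega>) = Fkv {1..N} (\<tau> 1) (\<lambda>n\<in>{1..N}. g n \<omega>)"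
      by (rule Fkv_perm[OF tau 1])
    then show ?thesis unfolding gv_def \<tau>_def by simp
  qed
  ultimately show ?thesis unfolding gv_def by simp
qed

definition "good \<omega> \<longleftrightarrow> (\<forall>n\<in>{1..N}. 0 \<le> g n \<omega>) \<and> (\<forall>k\<in>{1..N}. 0 \<le> interf d \<alpha> h x k \<omega>)"

lemma AE_good: "AE \<omega> in M. good \<omega>"
  using gpos Ipos unfolding good_def by eventually_elim auto

lemma good_div: "good \<omega> \<Longrightarrow> n \<in> {1..N} \<Longrightarrow> g n \<omega> / interf d \<alpha> h x n \<omega> = max 0 (g n \<omega>) * Yr n \<omega>"
  unfolding good_def Yr_def by (auto simp: divide_inverse max_def)

lemma good_mx: "good \<omega> \<Longrightarrow> mxv {1..N} (gv \<omega>) = Max ((\<lambda>n. g n \<omega>) ` {1..N})"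
proof -
  assume "good \<omega>"
  then have "(\<lambda>n. max 0 (gv \<omega> n)) ` {1..N} = (\<lambda>n. g n \<omega>) ` {1..N}"
    unfolding good_def gv_def by (auto simp: max_def image_iff)
  then show ?thesis unfolding mxv_def by simp
qed

definition "GM = (\<integral>\<^sup>+\<omega>. ennreal (Max ((\<lambda>n. g n \<omega>) ` {1..N})) \<partial>M)"
definition "cF = (\<integral>\<^sup>+\<omega>. Fkv {1..N} 1 (gv \<omega>) \<partial>M)"

lemma NcF: "of_nat N * cF = GM"
proof -
  have "of_nat N * cF = (\<Sum>k\<in>{1..N}. (\<integral>\<^sup>+\<omega>. Fkv {1..N} k (gv \<omega>) \<partial>M))"
  proof -
    have "(\<Sum>k\<in>{1..N}. (\<integral>\<^sup>+\<omega>. Fkv {1..N} k (gv \<omega>) \<partial>M)) = (\<Sum>k\<in>{1..N}. cF)"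
      unfolding cF_def by (rule sum.cong[OF refl], rule E_F_eq)
    then show ?thesis by simp
  qed
  also have "\<dots> = (\<integral>\<^sup>+\<omega>. (\<Sum>k\<in>{1..N}. ennreal (Fkv {1..N} k (gv \<omega>))) \<partial>M)"
    by (rule nn_integral_sum[symmetric])
       (use measurable_compose[OF gv_meas Fkv_meas] in auto)
  also have "\<dots> = GM"
    unfolding GM_def
  proof (rule nn_integral_cong_AE)
    show "AE \<omega> in M. (\<Sum>k\<in>{1..N}. ennreal (Fkv {1..N} k (gv \<omega>))) = ennreal (Max ((\<lambda>n. g n \<omega>) ` {1..N}))"
      using AE_good
    proof eventually_elim
      case (elim \<omega>)
      have ne: "{1..N} \<noteq> {}" using N1 by auto
      show ?case using Fkv_sum[OF _ ne, of "gv \<omega>"] good_mx[OF elim] ne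
        by (simp add: Fkv_nonneg)
    qed
  qed
  finally show ?thesis .
qed

definition "EY k = (\<integral>\<^sup>+\<omega>. Yr k \<omega> \<partial>M)"

lemma nA: "(\<integral>\<^sup>+\<omega>. ennreal (\<Sum>n=1..N. g n \<omega> / interf d \<alpha> h x n \<omega>) \<partial>M) = (\<Sum>k\<in>{1..N}. EY k)"
proof -
  have "(\<integral>\<^sup>+\<omega>. ennreal (\<Sum>n=1..N. g n \<omega> / interf d \<alpha> h x n \<omega>) \<partial>M) =
        (\<integral>\<^sup>+\<omega>. (\<Sum>n=1..N. ennreal (max 0 (g n \<omega>) * Yr n \<omega>)) \<partial>M)"
  proof (rule nn_integral_cong_AE)
    show "AE \<omega> in M. ennreal (\<Sum>n=1..N. g n \<omega> / interf d \<alpha> h x n \<omega>) = (\<Sum>n=1..N. ennreal (max 0 (g n \<omega>) * Yr n \<omega>))"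
      using AE_good
    proof eventually_elim
      case (elim \<omega>)
      have "(\<Sum>n=1..N. g n \<omega> / interf d \<alpha> h x n \<omega>) = (\<Sum>n=1..N. max 0 (g n \<omega>) * Yr n \<omega>)"
        by (rule sum.cong[OF refl], rule good_div[OF elim])
      then show ?case by (simp add: Yr_nonneg)
    qed
  qed
  also have "\<dots> = (\<Sum>n=1..N. (\<integral>\<^sup>+\<omega>. ennreal (max 0 (g n \<omega>) * Yr n \<omega>) \<partial>M))"
  proof (rule nn_integral_sum)
    fix n assume n: "n \<in> {1..N}"
    show "(\<lambda>\<omega>. ennreal (max 0 (g n \<omega>) * Yr n \<omega>)) \<in> borel_measurable M"
      using gmeas[OF n] Yr_meas[OF n] by measurable
  qed
  also have "\<dots> = (\<Sum>k\<in>{1..N}. EY k)"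
    unfolding EY_def by (rule sum.cong[OF refl], rule E_gY)
  finally show ?thesis .
qed

lemma nB: "cF * (\<Sum>k\<in>{1..N}. EY k) \<le> (\<integral>\<^sup>+\<omega>. ennreal (Max ((\<lambda>n. g n \<omega> / interf d \<alpha> h x n \<omega>) ` {1..N})) \<partial>M)"
proof -
  have "cF * (\<Sum>k\<in>{1..N}. EY k) = (\<Sum>k\<in>{1..N}. (\<integral>\<^sup>+\<omega>. ennreal (Fkv {1..N} k (gv \<omega>) * Yr k \<omega>) \<partial>M))"
    unfolding sum_distrib_left
  proof (rule sum.cong[OF refl])
    fix k assume k: "k \<in> {1..N}"
    show "cF * EY k = (\<integral>\<^sup>+\<omega>. ennreal (Fkv {1..N} k (gv \<omega>) * Yr k \<omega>) \<partial>M)"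
      unfolding E_FY[OF k] E_F_eq[OF k] cF_def EY_def ..
  qed
  also have "\<dots> = (\<integral>\<^sup>+\<omega>. (\<Sum>k\<in>{1..N}. ennreal (Fkv {1..N} k (gv \<omega>) * Yr k \<omega>)) \<partial>M)"
  proof (rule nn_integral_sum[symmetric])
    fix k assume k: "k \<in> {1..N}"
    show "(\<lambda>\<omega>. ennreal (Fkv {1..N} k (gv \<omega>) * Yr k \<omega>)) \<in> borel_measurable M"
      using measurable_compose[OF gv_meas Fkv_meas[OF k]] Yr_meas[OF k] by measurable
  qed
  also have "\<dots> \<le> (\<integral>\<^sup>+\<omega>. ennreal (Max ((\<lambda>n. g n \<omega> / interf d \<alpha> h x n \<omega>) ` {1..N})) \<partial>M)"
  proof (rule nn_integral_mono_AE)
    show "AE \<omega> in M. (\<Sum>k\<in>{1..N}. ennreal (Fkv {1..N} k (gv \<omega>) * Yr k \<omega>)) \<le> ennreal (Max ((\<lambda>n. g n \<omega> / interf d \<alpha> h x n \<omega>) ` {1..N}))"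
      using AE_good
    proof eventually_elim
      case (elim \<omega>)
      have ne: "{1..N} \<noteq> {}" using N1 by auto
      have "(\<Sum>k\<in>{1..N}. Fkv {1..N} k (gv \<omega>) * Yr k \<omega>) \<le> Max ((\<lambda>k. max 0 (gv \<omega> k) * Yr k \<omega>) ` {1..N})"
        by (rule Fkv_le[OF _ ne]) (auto simp: Yr_nonneg)
      also have "(\<lambda>k. max 0 (gv \<omega> k) * Yr k \<omega>) ` {1..N} = (\<lambda>n. g n \<omega> / interf d \<alpha> h x n \<omega>) ` {1..N}"
        using good_div[OF elim] by (auto simp: gv_def image_iff)
      finally have "(\<Sum>k\<in>{1..N}. Fkv {1..N} k (gv \<omega>) * Yr k \<omega>) \<le> Max ((\<lambda>n. g n \<omega> / interf d \<alpha> h x n \<omega>) ` {1..N})" .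
      then show ?case using ne by (simp add: Yr_nonneg Fkv_nonneg ennreal_leI)
    qed
  qed
  finally show ?thesis .
qed

lemma GM_bounds: "1 \<le> GM" "GM \<le> of_nat N"
proof -
  have 1: "1 \<in> {1..N}" using N1 by auto
  have "1 = (\<integral>\<^sup>+\<omega>. ennreal (g 1 \<omega>) \<partial>M)" using Eg[OF 1] by simp
  also have "\<dots> \<le> GM" unfolding GM_def
    by (rule nn_integral_mono) (intro ennreal_leI Max_ge, use 1 in auto)
  finally show "1 \<le> GM" .
  have "GM \<le> (\<integral>\<^sup>+\<omega>. (\<Sum>n\<in>{1..N}. ennreal (g n \<omega>)) \<partial>M)" unfolding GM_def
  proof (rule nn_integral_mono_AE)
    show "AE \<omega> in M. ennreal (Max ((\<lambda>n. g n \<omega>) ` {1..N})) \<le> (\<Sum>n\<in>{1..N}. ennreal (g n \<omega>))"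
      using AE_good
    proof eventually_elim
      case (elim \<omega>)
      have ne: "{1..N} \<noteq> {}" using N1 by auto
      have "Max ((\<lambda>n. g n \<omega>) ` {1..N}) \<in> (\<lambda>n. g n \<omega>) ` {1..N}" using ne by (intro Max_in) auto
      then obtain j where j: "j \<in> {1..N}" "Max ((\<lambda>n. g n \<omega>) ` {1..N}) = g j \<omega>" by auto
      have "g j \<omega> \<le> (\<Sum>n\<in>{1..N}. g n \<omega>)"
        using elim j by (intro member_le_sum) (auto simp: good_def)
      moreover have "(\<Sum>n\<in>{1..N}. ennreal (g n \<omega>)) = ennreal (\<Sum>n\<in>{1..N}. g n \<omega>)"
        by (rule sum_ennreal) (use elim in \<open>auto simp: good_def\<close>)
      ultimately show ?case using j by (simp add: ennreal_leI)
    qed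
  qed
  also have "\<dots> = (\<Sum>n\<in>{1..N}. (\<integral>\<^sup>+\<omega>. ennreal (g n \<omega>) \<partial>M))"
    by (rule nn_integral_sum) (use gmeas in auto)
  also have "\<dots> = of_nat N" using Eg by simp
  finally show "GM \<le> of_nat N" .
qed

lemma part1:
  "(\<integral>\<omega>. (\<Sum>n=1..N. g n \<omega> / interf d \<alpha> h x n \<omega>) \<partial>M) /
   (\<integral>\<omega>. Max ((\<lambda>n. g n \<omega> / interf d \<alpha> h x n \<omega>) ` {1..N}) \<partial>M)
   \<le> real N * (\<integral>\<omega>. g 1 \<omega> \<partial>M) / (\<integral>\<omega>. Max ((\<lambda>n. g n \<omega>) ` {1..N}) \<partial>M)"
proof -
  have 1: "1 \<in> {1..N}" using N1 by auto
  have ne: "{1..N} \<noteq> {}" using N1 by auto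
  note gm[measurable] = gmeas interf_meas
  define s where "s = (\<Sum>k\<in>{1..N}. EY k)"
  define nB where "nB = (\<integral>\<^sup>+\<omega>. ennreal (Max ((\<lambda>n. g n \<omega> / interf d \<alpha> h x n \<omega>) ` {1..N})) \<partial>M)"
  have A: "(\<integral>\<omega>. (\<Sum>n=1..N. g n \<omega> / interf d \<alpha> h x n \<omega>) \<partial>M) = enn2real s"
  proof -
    have "(\<integral>\<omega>. (\<Sum>n=1..N. g n \<omega> / interf d \<alpha> h x n \<omega>) \<partial>M) =
          enn2real (\<integral>\<^sup>+\<omega>. ennreal (\<Sum>n=1..N. g n \<omega> / interf d \<alpha> h x n \<omega>) \<partial>M)"
    proof (rule integral_eq_nn_integral)
      show "(\<lambda>\<omega>. \<Sum>n = 1..N. g n \<omega> / interf d \<alpha> h x n \<omega>) \<in> borel_measurable M"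
        by (rule borel_measurable_sum) (use gmeas interf_meas in measurable)
      show "AE \<omega> in M. 0 \<le> (\<Sum>n = 1..N. g n \<omega> / interf d \<alpha> h x n \<omega>)"
        using AE_good by eventually_elim (auto simp: good_def intro!: sum_nonneg divide_nonneg_nonneg)
    qed
    then show ?thesis using nA s_def by simp
  qed
  have B: "(\<integral>\<omega>. Max ((\<lambda>n. g n \<omega> / interf d \<alpha> h x n \<omega>) ` {1..N}) \<partial>M) = enn2real nB"
    unfolding nB_def
  proof (rule integral_eq_nn_integral)
    show "(\<lambda>\<omega>. Max ((\<lambda>n. g n \<omega> / interf d \<alpha> h x n \<omega>) ` {1..N})) \<in> borel_measurable M"
      by (rule borel_measurable_Max) (use gmeas interf_meas in measurable)
    show "AE \<omega> in M. 0 \<le> Max ((\<lambda>n. g n \<omega> / interf d \<alpha> h x n \<omega>) ` {1..N})"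
      using AE_good
    proof eventually_elim
      case (elim \<omega>)
      have "0 \<le> g 1 \<omega> / interf d \<alpha> h x 1 \<omega>" using elim 1 by (auto simp: good_def)
      also have "\<dots> \<le> Max ((\<lambda>n. g n \<omega> / interf d \<alpha> h x n \<omega>) ` {1..N})"
        using 1 by (intro Max_ge) auto
      finally show ?case .
    qed
  qed
  have G: "(\<integral>\<omega>. g 1 \<omega> \<partial>M) = 1"
  proof -
    have "(\<integral>\<omega>. g 1 \<omega> \<partial>M) = enn2real (\<integral>\<^sup>+\<omega>. ennreal (g 1 \<omega>) \<partial>M)"
      by (rule integral_eq_nn_integral) (use gmeas[OF 1] AE_good 1 in \<open>auto simp: good_def elim: AE_mp\<close>)
    then show ?thesis using Eg[OF 1] by simp
  qed
  have Gm: "(\<integral>\<omega>. Max ((\<lambda>n. g n \<omega>) ` {1..N}) \<partial>M) = enn2real GM"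
    unfolding GM_def
  proof (rule integral_eq_nn_integral)
    show "(\<lambda>\<omega>. Max ((\<lambda>n. g n \<omega>) ` {1..N})) \<in> borel_measurable M"
      by (rule borel_measurable_Max) (use gmeas in auto)
    show "AE \<omega> in M. 0 \<le> Max ((\<lambda>n. g n \<omega>) ` {1..N})"
      using AE_good
    proof eventually_elim
      case (elim \<omega>)
      have "0 \<le> g 1 \<omega>" using elim 1 by (auto simp: good_def)
      also have "\<dots> \<le> Max ((\<lambda>n. g n \<omega>) ` {1..N})" using 1 by (intro Max_ge) auto
      finally show ?case .
    qed
  qed
  have GMfin: "GM \<noteq> \<top>" using GM_bounds(2) by (metis ennreal_of_nat_neq_top top.extremum_uniqueI)
  define gmr where "gmr = enn2real GM"
  have gmr1: "1 \<le> gmr" unfolding gmr_def using GM_bounds(1) GMfin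
    using enn2real_mono[OF GM_bounds(1)] by (simp add: top.not_eq_extremum)
  have cFfin: "cF \<noteq> \<top>" using NcF GMfin N1
    by (metis ennreal_mult_eq_top_iff of_nat_eq_0_iff not_one_le_zero ennreal_of_nat_eq_real_of_nat ennreal_eq_0_iff)
  define cr where "cr = enn2real cF"
  have Ncr: "real N * cr = gmr"
    unfolding cr_def gmr_def NcF[symmetric] by (simp add: enn2real_mult)
  have cr_pos: "cr > 0" using Ncr gmr1 N1
    by (metis cr_def enn2real_nonneg less_eq_real_def mult_zero_right not_one_le_zero)
  show ?thesis
    unfolding A B G Gm gmr_def[symmetric]
  proof (cases "s = \<top> \<or> nB = \<top>")
    case True
    then show "enn2real s / enn2real nB \<le> real N * 1 / gmr" using gmr1 by auto
  next
    case False
    then have sf: "s \<noteq> \<top>" and bf: "nB \<noteq> \<top>" by auto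
    have "cr * enn2real s \<le> enn2real nB"
    proof -
      have "enn2real (cF * s) \<le> enn2real nB"
        using nB[folded s_def nB_def] bf by (intro enn2real_mono) (auto simp: top.not_eq_extremum)
      then show ?thesis unfolding cr_def by (simp add: enn2real_mult)
    qed
    moreover have "0 \<le> enn2real s" "0 \<le> enn2real nB" by simp_all
    ultimately have "enn2real s / enn2real nB \<le> 1 / cr"
      using cr_pos by (intro div_helper) auto
    also have "1 / cr = real N * 1 / gmr" using Ncr cr_pos N1 by (auto simp: field_simps)
    finally show "enn2real s / enn2real nB \<le> real N * 1 / gmr" .
  qed
qed

end

lemma gamma_erlang:
  fixes m :: nat assumes m: "m \<ge> 1"
  shows "ennreal (gamma_density (real m) (1 / real m) t) * ennreal t = ennreal (erlang_density (m - 1) (real m) t * t ^ 1)"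
proof (cases "t > 0")
  case True
  have Gm: "Gamma (real m) = fact (m - 1)"
    using Gamma_fact[of "m - 1", where 'a=real] m by (simp add: of_nat_diff)
  have p1: "t powr (real m - 1) = t ^ (m - 1)"
    using True m by (simp add: powr_realpow[symmetric] of_nat_diff)
  have p2: "(1 / real m) powr real m = 1 / real m ^ m"
    using m by (simp add: powr_realpow powr_divide power_one_over)
  have e: "- t / (1 / real m) = - real m * t" by simp
  have "gamma_density (real m) (1 / real m) t = erlang_density (m - 1) (real m) t"
    using True m unfolding gamma_density_def erlang_density_def p1 p2 e Gm
    by (simp add: field_simps)
  then show ?thesis using True by (simp add: ennreal_mult[symmetric])
next
  case False
  then show ?thesis by (cases "t = 0") (auto simp: gamma_density_def erlang_density_def)
qed

lemma G0_gamma: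
  fixes m :: nat assumes m: "m \<ge> 1"
  shows "(\<integral>\<^sup>+t. ennreal (gamma_density (real m) (1 / real m) t) * ennreal t \<partial>lborel) = 1"
proof -
  have "(\<integral>\<^sup>+t. ennreal (gamma_density (real m) (1 / real m) t) * ennreal t \<partial>lborel) =
        (\<integral>\<^sup>+t. ennreal (erlang_density (m - 1) (real m) t * t ^ 1) \<partial>lborel)"
    using gamma_erlang[OF m] by simp
  also have "\<dots> = fact (m - 1 + 1) / (fact (m - 1) * real m ^ 1)"
    using m by (intro nn_integral_erlang_ith_moment) auto
  also have "\<dots> = 1"
  proof -
    have "fact (m - 1 + 1) = real m * fact (m - 1)" using m by (cases m) auto
    then show ?thesis using m by simp
  qed
  finally show ?thesis .
qed

lemma (in prob_space) distributed_AE_nonneg: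
  fixes X :: "'a \<Rightarrow> real"
  assumes D: "distributed M lborel X f" and f: "\<And>t. t < 0 \<Longrightarrow> f t = 0"
  shows "AE \<omega> in M. 0 \<le> X \<omega>"
proof -
  have "AE t in density lborel f. 0 \<le> t"
  proof (subst AE_density)
    show "f \<in> borel_measurable lborel" using distributed_borel_measurable[OF D] by simp
    have "0 < f t \<longrightarrow> 0 \<le> t" for t using f[of t] by (cases "t < 0") auto
    then show "AE t in lborel. 0 < f t \<longrightarrow> 0 \<le> t" by (intro AE_I2) auto
  qed
  then have "AE t in distr M lborel X. 0 \<le> t" unfolding distributed_distr_eq_density[OF D] .
  then show ?thesis
    by (subst (asm) AE_distr_iff) (use distributed_measurable[OF D] in auto)
qed


lemma tele_sum: "(\<Sum>j=1..N. u ^ (j - 1) * (1 - u)) = 1 - (u::real) ^ N"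
proof (induction N)
  case (Suc N)
  then show ?case by (simp add: algebra_simps)
qed simp

lemma int_Hn:
  "(\<integral>\<^sup>+t. ennreal (1 - (1 - exp (-t)) ^ N) * indicator {0..} t \<partial>lborel) = ennreal (\<Sum>n=1..N. 1 / real n)"
proof -
  define F where "F t = (\<Sum>j=1..N. (1 - exp (-t)) ^ j / real j)" for t :: real
  have "(\<integral>\<^sup>+t. ennreal (1 - (1 - exp (-t)) ^ N) * indicator {0..} t \<partial>lborel) = (\<Sum>n=1..N. 1 / real n) - F 0"
  proof (rule nn_integral_FTC_atLeast)
    show "(\<lambda>t::real. 1 - (1 - exp (- t)) ^ N) \<in> borel_measurable borel" by measurable
    fix t :: real assume t: "0 \<le> t"
    have dj: "((\<lambda>t. (1 - exp (-t)) ^ j / real j) has_real_derivative (1 - exp (-t)) ^ (j - 1) * (1 - (1 - exp (-t)))) (at t)"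
      if j: "j \<in> {1..N}" for j
    proof -
      have e: "((\<lambda>t. 1 - exp (-t)) has_real_derivative exp (-t)) (at t)"
        by (auto intro!: derivative_eq_intros)
      have "((\<lambda>t. (1 - exp (-t)) ^ j / real j) has_real_derivative (of_nat j * (exp (-t) * (1 - exp (-t)) ^ (j - Suc 0))) / real j) (at t)"
        by (rule DERIV_cdivide, rule DERIV_power, rule e)
      moreover have "(of_nat j * (exp (-t) * (1 - exp (-t)) ^ (j - Suc 0))) / real j = (1 - exp (-t)) ^ (j - 1) * (1 - (1 - exp (-t)))"
        using j by simp
      ultimately show ?thesis by simp
    qed
    have d: "(F has_real_derivative (\<Sum>j=1..N. (1 - exp (-t)) ^ (j - 1) * (1 - (1 - exp (-t))))) (at t)"
      unfolding F_def by (rule DERIV_sum, rule dj)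
    then show "(F has_real_derivative 1 - (1 - exp (- t)) ^ N) (at t)" by (simp only: tele_sum)
    have "0 \<le> 1 - exp (-t)" "1 - exp (-t) \<le> 1" using t by auto
    then have "(1 - exp (- t)) ^ N \<le> 1" by (rule power_le_one)
    then show "0 \<le> 1 - (1 - exp (- t)) ^ N" by simp
  next
    have e: "((\<lambda>t::real. exp (- t)) \<longlongrightarrow> 0) at_top" by real_asymp
    show "(F \<longlongrightarrow> (\<Sum>n = 1..N. 1 / real n)) at_top"
      unfolding F_def
    proof (rule tendsto_sum)
      fix j assume j: "j \<in> {1..N}"
      have "((\<lambda>t. (1 - exp (-t)) ^ j / real j) \<longlongrightarrow> (1 - 0) ^ j / real j) at_top"
        by (intro tendsto_divide tendsto_power tendsto_diff tendsto_const e) (use j in auto)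
      then show "((\<lambda>t. (1 - exp (-t)) ^ j / real j) \<longlongrightarrow> 1 / real j) at_top" by simp
    qed
  qed
  moreover have "F 0 = 0" unfolding F_def by (intro sum.neutral) auto
  ultimately show ?thesis by simp
qed

context mimo2 begin

lemma GM_exp:
  assumes fg: "\<And>t. fg t = ennreal (gamma_density 1 1 t)"
    and gpos: "AE \<omega> in M. \<forall>n\<in>{1..N}. 0 \<le> g n \<omega>"
  shows "(\<integral>\<^sup>+\<omega>. ennreal (Max ((\<lambda>n. g n \<omega>) ` {1..N})) \<partial>M) = ennreal (\<Sum>n=1..N. 1 / real n)"
proof -
  define Mx where "Mx \<omega> = Max ((\<lambda>n. g n \<omega>) ` {1..N})" for \<omega>
  have ne: "{1..N} \<noteq> {}" using N1 by auto
  have Mxm[measurable]: "Mx \<in> borel_measurable M"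
    unfolding Mx_def by (rule borel_measurable_Max) (use gmeas in auto)
  have cdf: "emeasure M {\<omega>\<in>space M. g n \<omega> \<le> t} = ennreal (1 - exp (-t))" if n: "n \<in> {1..N}" and t: "0 \<le> t" for n t
  proof -
    have [measurable]: "g n \<in> borel_measurable M" using gmeas[OF n] .
    have "emeasure M {\<omega>\<in>space M. g n \<omega> \<le> t} = emeasure (distr M lborel (g n)) {..t}"
      by (subst emeasure_distr) (auto intro!: arg_cong2[where f=emeasure])
    also have "\<dots> = emeasure (density lborel fg) {..t}"
      unfolding distributed_distr_eq_density[OF g_distr[OF n]] ..
    also have "\<dots> = (\<integral>\<^sup>+x. fg x * indicator {..t} x \<partial>lborel)"
      using distributed_borel_measurable[OF g_distr[OF n]] by (subst emeasure_density) auto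
    also have "\<dots> = (\<integral>\<^sup>+x. ennreal (erlang_density 0 1 x) * indicator {..t} x \<partial>lborel)"
    proof (rule nn_integral_cong_AE)
      show "AE x in lborel. fg x * indicator {..t} x = ennreal (erlang_density 0 1 x) * indicator {..t} x"
        using AE_lborel_singleton[of 0]
        by eventually_elim (auto simp: fg gamma_density_def erlang_density_def)
    qed
    also have "\<dots> = erlang_CDF 0 1 t" by (rule nn_integral_erlang_density) simp
    also have "\<dots> = 1 - exp (-t)" using t by (simp add: erlang_CDF_0)
    finally show ?thesis .
  qed
  have prodc: "prob {\<omega>\<in>space M. Mx \<omega> \<le> t} = (1 - exp (-t)) ^ N" if t: "0 \<le> t" for t
  proof -
    have "{\<omega>\<in>space M. Mx \<omega> \<le> t} = (\<Inter>n\<in>{1..N}. g n -` {..t} \<inter> space M)"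
      using ne by (auto simp: Mx_def)
    then have "prob {\<omega>\<in>space M. Mx \<omega> \<le> t} = (\<Prod>n\<in>{1..N}. prob (g n -` {..t} \<inter> space M))"
      using indep_varsD[OF g_indep ne] by auto
    also have "\<dots> = (\<Prod>n\<in>{1..N}. 1 - exp (-t))"
    proof (rule prod.cong[OF refl])
      fix n assume n: "n \<in> {1..N}"
      have "g n -` {..t} \<inter> space M = {\<omega>\<in>space M. g n \<omega> \<le> t}" by auto
      then have "emeasure M (g n -` {..t} \<inter> space M) = ennreal (1 - exp (-t))" using cdf[OF n t] by simp
      then show "prob (g n -` {..t} \<inter> space M) = 1 - exp (-t)"
        using t by (simp add: emeasure_eq_measure)
    qed
    also have "\<dots> = (1 - exp (-t)) ^ N" by simp
    finally show ?thesis .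
  qed
  have tail: "emeasure M {\<omega>\<in>space M. t < Mx \<omega>} = ennreal (1 - (1 - exp (-t)) ^ N)" if t: "0 \<le> t" for t
  proof -
    have "{\<omega>\<in>space M. t < Mx \<omega>} = space M - {\<omega>\<in>space M. Mx \<omega> \<le> t}" by auto
    then have "prob {\<omega>\<in>space M. t < Mx \<omega>} = 1 - prob {\<omega>\<in>space M. Mx \<omega> \<le> t}"
      by (simp add: prob_compl)
    then show ?thesis using prodc[OF t] by (simp add: emeasure_eq_measure)
  qed
  define F where "F \<omega> t = (if 0 \<le> t \<and> t < Mx \<omega> then 1 else 0 :: ennreal)" for \<omega> t
  have Fm: "case_prod F \<in> borel_measurable (M \<Otimes>\<^sub>M lborel)"
    unfolding F_def case_prod_beta by measurable
  interpret pair_sigma_finite M lborel ..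
  have "(\<integral>\<^sup>+\<omega>. ennreal (Mx \<omega>) \<partial>M) = (\<integral>\<^sup>+\<omega>. (\<integral>\<^sup>+t. F \<omega> t \<partial>lborel) \<partial>M)"
  proof (rule nn_integral_cong_AE)
    show "AE \<omega> in M. ennreal (Mx \<omega>) = (\<integral>\<^sup>+t. F \<omega> t \<partial>lborel)"
      using gpos
    proof eventually_elim
      case (elim \<omega>)
      have "0 \<le> g 1 \<omega>" "g 1 \<omega> \<le> Mx \<omega>" using elim N1 by (auto simp: Mx_def intro!: Max_ge)
      then have m0: "0 \<le> Mx \<omega>" by simp
      have "(\<integral>\<^sup>+t. F \<omega> t \<partial>lborel) = (\<integral>\<^sup>+t. indicator {0..<Mx \<omega>} t \<partial>lborel)"
        by (rule nn_integral_cong) (auto simp: F_def)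
      also have "\<dots> = ennreal (Mx \<omega>)" using m0 by simp
      finally show ?case by simp
    qed
  qed
  also have "\<dots> = (\<integral>\<^sup>+t. (\<integral>\<^sup>+\<omega>. F \<omega> t \<partial>M) \<partial>lborel)"
    by (rule Fubini'[OF Fm, symmetric])
  also have "\<dots> = (\<integral>\<^sup>+t. ennreal (1 - (1 - exp (-t)) ^ N) * indicator {0..} t \<partial>lborel)"
  proof (rule nn_integral_cong)
    fix t :: real
    show "(\<integral>\<^sup>+\<omega>. F \<omega> t \<partial>M) = ennreal (1 - (1 - exp (-t)) ^ N) * indicator {0..} t"
    proof (cases "0 \<le> t")
      case True
      have "(\<integral>\<^sup>+\<omega>. F \<omega> t \<partial>M) = (\<integral>\<^sup>+\<omega>. indicator {\<omega>\<in>space M. t < Mx \<omega>} \<omega> \<partial>M)"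
        by (rule nn_integral_cong) (use True in \<open>auto simp: F_def\<close>)
      also have "\<dots> = emeasure M {\<omega>\<in>space M. t < Mx \<omega>}" by (rule nn_integral_indicator) measurable
      finally show ?thesis using tail[OF True] True by simp
    next
      case False
      then show ?thesis by (simp add: F_def)
    qed
  qed
  also have "\<dots> = ennreal (\<Sum>n=1..N. 1 / real n)" by (rule int_Hn)
  finally show ?thesis unfolding Mx_def .
qed

end

lemma ennreal_suminf_swap:
  fixes f :: "nat \<Rightarrow> nat \<Rightarrow> ennreal"
  shows "(\<Sum>i. \<Sum>j. f i j) = (\<Sum>j. \<Sum>i. f i j)"
proof -
  have s: "sigma_finite_measure (count_space (UNIV::nat set))"
    by (rule sigma_finite_measure_count_space_countable) simp
  interpret pair_sigma_finite "count_space (UNIV::nat set)" "count_space (UNIV::nat set)"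
    unfolding pair_sigma_finite_def using s by simp
  have m: "case_prod f \<in> borel_measurable (count_space UNIV \<Otimes>\<^sub>M count_space UNIV)"
    by (simp add: pair_measure_countable)
  show ?thesis
    using Fubini'[OF m] by (simp add: nn_integral_count_space_nat)
qed

lemma suminf_indicator_finite:
  assumes "finite S" shows "(\<Sum>i. indicator S i :: ennreal) = of_nat (card S)"
proof -
  have "(\<Sum>i. indicator S i :: ennreal) = (\<Sum>i\<in>S. indicator S i)"
    by (rule suminf_finite[OF assms]) auto
  then show ?thesis by simp
qed

lemma poisson_mean_sums:
  fixes \<mu> :: real
  shows "(\<lambda>k. real k * (\<mu> ^ k / fact k * exp (- \<mu>))) sums \<mu>"
proof -
  have "(\<lambda>n. \<mu> ^ n /\<^sub>R fact n) sums exp \<mu>" by (rule exp_converges)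
  then have "(\<lambda>n. (\<mu> * exp (-\<mu>)) * (\<mu> ^ n / fact n)) sums ((\<mu> * exp (-\<mu>)) * exp \<mu>)"
    by (intro sums_mult) (simp add: divide_inverse mult.commute)
  moreover have "(\<mu> * exp (-\<mu>)) * exp \<mu> = \<mu>" by (simp add: exp_minus)
  moreover have "(\<mu> * exp (-\<mu>)) * (\<mu> ^ n / fact n) = real (Suc n) * (\<mu> ^ Suc n / fact (Suc n) * exp (- \<mu>))" for n
    by (simp add: field_simps del: of_nat_Suc)
  ultimately have "(\<lambda>n. real (Suc n) * (\<mu> ^ Suc n / fact (Suc n) * exp (- \<mu>))) sums \<mu>"
    by (metis (no_types, lifting) sums_cong)
  then show ?thesis by (subst (asm) sums_Suc_iff) simp
qed

lemma dyadic_exists: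
  fixes r :: real assumes r: "1 < r"
  shows "\<exists>j::nat. 2 ^ j < r \<and> r \<le> 2 ^ Suc j"
proof -
  obtain n :: nat where n: "r < 2 ^ n" using real_arch_pow[of 2 r] by auto
  define S where "S = {j::nat. 2 ^ j < r}"
  have fin: "finite S"
  proof (rule finite_subset)
    show "S \<subseteq> {..<n}"
    proof
      fix j assume "j \<in> S"
      then have "(2::real) ^ j < 2 ^ n" using n unfolding S_def by (meson mem_Collect_eq less_trans)
      then show "j \<in> {..<n}" by (simp add: power_strict_increasing_iff)
    qed
  qed simp
  have 0: "0 \<in> S" using r by (simp add: S_def)
  define j where "j = Max S"
  have "j \<in> S" unfolding j_def using fin 0 by (intro Max_in) auto
  moreover have "Suc j \<notin> S" using Max_ge[OF fin, of "Suc j"] unfolding j_def by auto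
  ultimately show ?thesis by (auto simp: S_def not_less)
qed

definition ann :: "nat \<Rightarrow> (real^2) set" where
  "ann j = {y. 2 ^ j < norm y \<and> norm y \<le> 2 ^ Suc j}"

lemma ann_sets[measurable]: "ann j \<in> sets borel"
  unfolding ann_def by measurable

lemma ann_bounded: "bounded (ann j)"
  unfolding ann_def bounded_iff by auto

lemma ann_measure: "measure lborel (ann j) \<le> 16 * 4 ^ j"
proof -
  define r :: real where "r = 2 ^ Suc j"
  have r0: "0 \<le> r" by (simp add: r_def)
  have sub: "ann j \<subseteq> cbox (\<chi> i. - r) (\<chi> i. r)"
  proof
    fix y assume "y \<in> ann j"
    then have "norm y \<le> r" by (simp add: ann_def r_def)
    then have "\<bar>y $ i\<bar> \<le> r" for i using component_le_norm_cart[of y i] by linarith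
    then show "y \<in> cbox (\<chi> i. - r) (\<chi> i. r)" unfolding mem_box_cart by (auto simp: abs_le_iff) (smt (verit))
  qed
  have "measure lborel (ann j) \<le> measure lborel (cbox (\<chi> i. - r) (\<chi> i. r) :: (real^2) set)"
    by (rule measure_mono_fmeasurable[OF sub]) auto
  also have "\<dots> = (\<Prod>i\<in>(UNIV::2 set). r - (- r))"
  proof (subst content_cbox_cart)
    have "(0::real^2) \<in> cbox (\<chi> i. - r) (\<chi> i. r)" using r0 by (simp add: mem_box_cart)
    then show "cbox (\<chi> i. - r) (\<chi> i. r) \<noteq> ({}::(real^2) set)" by auto
  qed simp
  also have "\<dots> = (2 * r) ^ 2" by simp
  also have "\<dots> = 16 * 4 ^ j"
  proof -
    have "(4::real) ^ j = (2 ^ 2) ^ j" by simp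
    then have "(4::real) ^ j = 2 ^ (j * 2)" by (simp only: power_mult[symmetric] mult.commute)
    then show ?thesis by (simp add: r_def power_mult_distrib power_mult[symmetric])
  qed
  finally show ?thesis .
qed

locale ppp_loc = prob_space M for M :: "'a measure" +
  fixes lam :: real and x :: "nat \<Rightarrow> 'a \<Rightarrow> real^2"
  assumes ppp: "is_ppp M lam x" and lam: "lam > 0"
begin

lemma xm[measurable]: "x i \<in> borel_measurable M" using ppp by (simp add: is_ppp_def)

lemma AE_fin: "bounded B \<Longrightarrow> AE \<omega> in M. finite {i. x i \<omega> \<in> B}"
  using ppp unfolding is_ppp_def by (auto elim: AE_mp)

lemma poisson: "B \<in> sets borel \<Longrightarrow> bounded B \<Longrightarrow>
    measure M {\<omega> \<in> space M. pcount x B \<omega> = k} = (lam * measure lborel B) ^ k / fact k * exp (- (lam * measure lborel B))"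
  using ppp unfolding is_ppp_def by blast

lemma EC:
  assumes B: "B \<in> sets borel" "bounded B"
  shows "(\<integral>\<^sup>+\<omega>. (\<Sum>i. indicator B (x i \<omega>)) \<partial>M) = ennreal (lam * measure lborel B)"
proof -
  define \<mu> where "\<mu> = lam * measure lborel B"
  have \<mu>0: "0 \<le> \<mu>" using lam by (simp add: \<mu>_def)
  define P where "P k = {\<omega> \<in> space M. pcount x B \<omega> = k}" for k
  have PP: "measure M (P k) = \<mu> ^ k / fact k * exp (- \<mu>)" for k
    unfolding P_def \<mu>_def using poisson[OF B] .
  have "(\<integral>\<^sup>+\<omega>. (\<Sum>i. indicator B (x i \<omega>)) \<partial>M) = (\<integral>\<^sup>+\<omega>. of_nat (pcount x B \<omega>) \<partial>M)"
  proof (rule nn_integral_cong_AE)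
    show "AE \<omega> in M. (\<Sum>i. indicator B (x i \<omega>) :: ennreal) = of_nat (pcount x B \<omega>)"
      using AE_fin[OF B(2)]
    proof eventually_elim
      case (elim \<omega>)
      have "(\<lambda>i. indicator B (x i \<omega>) :: ennreal) = indicator {i. x i \<omega> \<in> B}"
        by (auto simp: indicator_def)
      then show ?case using suminf_indicator_finite[OF elim] by (simp add: pcount_def)
    qed
  qed
  also have "\<dots> = ennreal \<mu>"
  proof (cases "\<mu> = 0")
    case True
    then have "prob (P 0) = 1" using PP[of 0] by simp
    then have "AE \<omega> in M. \<omega> \<in> P 0" by (rule AE_prob_1)
    then have "(\<integral>\<^sup>+\<omega>. of_nat (pcount x B \<omega>) \<partial>M) = (\<integral>\<^sup>+\<omega>. 0 \<partial>M)"
      by (intro nn_integral_cong_AE) (auto simp: P_def elim: AE_mp)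
    then show ?thesis using True by simp
  next
    case False
    then have \<mu>p: "\<mu> > 0" using \<mu>0 by simp
    have Pm: "P k \<in> sets M" for k
    proof (rule ccontr)
      assume "P k \<notin> sets M"
      then have "measure M (P k) = 0" by (rule measure_notin_sets)
      moreover have "\<mu> ^ k / fact k * exp (- \<mu>) > 0" using \<mu>p by simp
      ultimately show False using PP[of k] by linarith
    qed
    have "(\<integral>\<^sup>+\<omega>. of_nat (pcount x B \<omega>) \<partial>M) = (\<integral>\<^sup>+\<omega>. (\<Sum>k. of_nat k * indicator (P k) \<omega>) \<partial>M)"
    proof (rule nn_integral_cong)
      fix \<omega> assume \<omega>: "\<omega> \<in> space M"
      have "(\<Sum>k. of_nat k * indicator (P k) \<omega> :: ennreal) = (\<Sum>k\<in>{pcount x B \<omega>}. of_nat k * indicator (P k) \<omega>)"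
        by (rule suminf_finite) (auto simp: P_def)
      then show "(of_nat (pcount x B \<omega>) :: ennreal) = (\<Sum>k. of_nat k * indicator (P k) \<omega>)"
        using \<omega> by (simp add: P_def)
    qed
    also have "\<dots> = (\<Sum>k. (\<integral>\<^sup>+\<omega>. of_nat k * indicator (P k) \<omega> \<partial>M))"
      by (rule nn_integral_suminf) (use Pm in auto)
    also have "\<dots> = (\<Sum>k. ennreal (real k * (\<mu> ^ k / fact k * exp (- \<mu>))))"
    proof (rule suminf_cong)
      fix k
      have "(\<integral>\<^sup>+\<omega>. of_nat k * indicator (P k) \<omega> \<partial>M) = of_nat k * emeasure M (P k)"
        by (rule nn_integral_cmult_indicator[OF Pm])
      also have "\<dots> = ennreal (real k * (\<mu> ^ k / fact k * exp (- \<mu>)))"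
        using PP[of k] Pm \<mu>0 by (simp add: emeasure_eq_measure ennreal_of_nat_eq_real_of_nat ennreal_mult'[symmetric])
      finally show "(\<integral>\<^sup>+\<omega>. of_nat k * indicator (P k) \<omega> \<partial>M) = ennreal (real k * (\<mu> ^ k / fact k * exp (- \<mu>)))" .
    qed
    also have "\<dots> = ennreal \<mu>"
      by (rule suminf_ennreal_eq[OF _ poisson_mean_sums]) (use \<mu>0 in simp)
    finally show ?thesis .
  qed
  finally show ?thesis unfolding \<mu>_def .
qed

end

lemma sum_single: "sum f {j} = f j" by simp

definition fa :: "real \<Rightarrow> real^2 \<Rightarrow> real" where
  "fa \<alpha> y = (if 1 < norm y then norm y powr (- \<alpha>) else 0)"

lemma fa_le:
  assumes a: "0 < \<alpha>"
  shows "ennreal (fa \<alpha> y) \<le> (\<Sum>j. ennreal ((2 powr (- \<alpha>)) ^ j) * indicator (ann j) y)"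
proof (cases "1 < norm y")
  case True
  obtain j where j: "2 ^ j < norm y" "norm y \<le> 2 ^ Suc j" using dyadic_exists[OF True] by blast
  have "norm y powr (- \<alpha>) \<le> (2 ^ j) powr (- \<alpha>)"
    using j a by (intro powr_mono2') auto
  also have "(2 ^ j :: real) powr (- \<alpha>) = (2 powr (- \<alpha>)) ^ j"
  proof -
    have "(2 ^ j :: real) = 2 powr real j" by (simp add: powr_realpow)
    then have "(2 ^ j :: real) powr (- \<alpha>) = 2 powr (real j * (- \<alpha>))" by (simp add: powr_powr)
    also have "\<dots> = (2 powr (- \<alpha>)) powr real j" by (simp add: powr_powr mult.commute)
    also have "\<dots> = (2 powr (- \<alpha>)) ^ j" by (simp add: powr_realpow)
    finally show ?thesis .
  qed
  finally have 1: "ennreal (fa \<alpha> y) \<le> ennreal ((2 powr (- \<alpha>)) ^ j) * indicator (ann j) y"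
    using True j by (simp add: fa_def ann_def ennreal_leI)
  also have "\<dots> = (\<Sum>k\<in>{j}. ennreal ((2 powr (- \<alpha>)) ^ k) * indicator (ann k) y)"
    by (rule sum_single[symmetric])
  also have "\<dots> \<le> (\<Sum>k. ennreal ((2 powr (- \<alpha>)) ^ k) * indicator (ann k) y)"
    by (rule sum_le_suminf) (auto intro: summableI)
  finally show ?thesis .
qed (simp add: fa_def)

lemma four_q: assumes "2 < \<alpha>" shows "4 * 2 powr (- \<alpha>) < (1::real)"
proof -
  have "(2::real) powr (- \<alpha>) < 2 powr (-2)" using assms by (intro powr_less_mono) auto
  also have "(2::real) powr (-2) = 1 / 4" by (simp add: powr_minus powr_numeral)
  finally show ?thesis by simp
qed

context ppp_loc begin

lemma Ef:
  assumes a: "2 < \<alpha>"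
  shows "(\<integral>\<^sup>+\<omega>. (\<Sum>i. ennreal (fa \<alpha> (x i \<omega>))) \<partial>M) < \<top>"
proof -
  define q where "q = (2::real) powr (- \<alpha>)"
  have q0: "0 \<le> q" by (simp add: q_def)
  have C[measurable]: "(\<lambda>\<omega>. \<Sum>i. indicator (ann j) (x i \<omega>) :: ennreal) \<in> borel_measurable M" for j
    by measurable
  have "(\<integral>\<^sup>+\<omega>. (\<Sum>i. ennreal (fa \<alpha> (x i \<omega>))) \<partial>M) \<le>
        (\<integral>\<^sup>+\<omega>. (\<Sum>i. \<Sum>j. ennreal (q ^ j) * indicator (ann j) (x i \<omega>)) \<partial>M)"
    using a by (intro nn_integral_mono suminf_le) (auto simp: q_def intro!: fa_le summableI)
  also have "\<dots> = (\<integral>\<^sup>+\<omega>. (\<Sum>j. ennreal (q ^ j) * (\<Sum>i. indicator (ann j) (x i \<omega>))) \<partial>M)"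
    by (simp add: ennreal_suminf_swap[of "\<lambda>i j. ennreal (q ^ j) * indicator (ann j) (x i _)"])
  also have "\<dots> = (\<Sum>j. (\<integral>\<^sup>+\<omega>. ennreal (q ^ j) * (\<Sum>i. indicator (ann j) (x i \<omega>)) \<partial>M))"
    by (rule nn_integral_suminf) measurable
  also have "\<dots> = (\<Sum>j. ennreal (q ^ j) * ennreal (lam * measure lborel (ann j)))"
    by (subst nn_integral_cmult) (auto simp: EC ann_bounded)
  also have "\<dots> \<le> (\<Sum>j. ennreal (16 * lam * (4 * q) ^ j))"
  proof (intro suminf_le summableI)
    fix j
    have "q ^ j * (lam * measure lborel (ann j)) \<le> q ^ j * (lam * (16 * 4 ^ j))"
      using lam q0 ann_measure[of j] by (intro mult_left_mono) auto
    also have "\<dots> = 16 * lam * (4 * q) ^ j" by (simp add: power_mult_distrib)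
    finally show "ennreal (q ^ j) * ennreal (lam * measure lborel (ann j)) \<le> ennreal (16 * lam * (4 * q) ^ j)"
      using q0 lam by (simp add: ennreal_mult[symmetric] ennreal_leI)
  qed
  also have "\<dots> < \<top>"
  proof -
    have "summable (\<lambda>j. (4 * q) ^ j)" using four_q[OF a] q0 by (intro summable_geometric) (auto simp: q_def)
    then have "summable (\<lambda>j. 16 * lam * (4 * q) ^ j)" by (rule summable_mult)
    then show ?thesis using lam q0 by (simp add: ennreal_suminf_neq_top top.not_eq_extremum[symmetric])
  qed
  finally show ?thesis .
qed

end

lemma Eh_fin:
  fixes m :: real assumes m: "0 < m"
  shows "(\<integral>\<^sup>+t. ennreal (gamma_density m (1/m) t) * ennreal t \<partial>lborel) < \<top>"
proof -
  define C where "C = m powr m / Gamma m"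
  have C0: "0 \<le> C" unfolding C_def using m by (simp add: Gamma_real_pos less_imp_le)
  have "(\<integral>\<^sup>+t. ennreal (gamma_density m (1/m) t) * ennreal t \<partial>lborel) =
        (\<integral>\<^sup>+t. ennreal C * ennreal (indicator {0..} t * t powr m / exp (m * t)) \<partial>lborel)"
  proof (rule nn_integral_cong)
    fix t :: real
    show "ennreal (gamma_density m (1/m) t) * ennreal t = ennreal C * ennreal (indicator {0..} t * t powr m / exp (m * t))"
    proof (cases "0 < t")
      case True
      have "gamma_density m (1/m) t * t = C * (t powr m / exp (m * t))"
        using True m unfolding gamma_density_def C_def
        by (simp add: powr_divide powr_diff exp_minus field_simps powr_minus)
      moreover have "ennreal (gamma_density m (1/m) t) * ennreal t = ennreal (gamma_density m (1/m) t * t)"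
        by (rule ennreal_mult''[symmetric]) (use True in simp)
      moreover have "ennreal C * ennreal (indicator {0..} t * t powr m / exp (m * t)) = ennreal (C * (t powr m / exp (m * t)))"
        using True C0 by (simp add: ennreal_mult[symmetric])
      ultimately show ?thesis by simp
    next
      case False
      then show ?thesis using m by (cases "t = 0") (auto simp: gamma_density_def indicator_def)
    qed
  qed
  also have "\<dots> = ennreal C * (\<integral>\<^sup>+t. ennreal (indicator {0..} t * t powr m / exp (m * t)) \<partial>lborel)"
    by (rule nn_integral_cmult) measurable
  also have "(\<integral>\<^sup>+t. ennreal (indicator {0..} t * t powr m / exp (m * t)) \<partial>lborel) =
      ennreal \<bar>1/m\<bar> * (\<integral>\<^sup>+t. ennreal (indicator {0..} (0 + 1/m * t) * (0 + 1/m * t) powr m / exp (m * (0 + 1/m * t))) \<partial>lborel)"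
    by (rule nn_integral_real_affine) (use m in auto)
  also have "(\<integral>\<^sup>+t. ennreal (indicator {0..} (0 + 1/m * t) * (0 + 1/m * t) powr m / exp (m * (0 + 1/m * t))) \<partial>lborel) =
      (\<integral>\<^sup>+t. ennreal (m powr (- m)) * ennreal (indicator {0..} t * t powr (m + 1 - 1) / exp t) \<partial>lborel)"
  proof (rule nn_integral_cong)
    fix t :: real
    show "ennreal (indicator {0..} (0 + 1/m * t) * (0 + 1/m * t) powr m / exp (m * (0 + 1/m * t))) =
      ennreal (m powr (- m)) * ennreal (indicator {0..} t * t powr (m + 1 - 1) / exp t)"
    proof (cases "0 \<le> t")
      case True
      have "(t / m) powr m = m powr (- m) * t powr m" using True m
        by (subst powr_divide) (auto simp: powr_minus_divide)
      then show ?thesis using True m by (simp add: ennreal_mult[symmetric] indicator_def)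
    next
      case False
      then show ?thesis using m by (simp add: indicator_def zero_le_divide_iff)
    qed
  qed
  also have "\<dots> = ennreal (m powr (- m)) * (\<integral>\<^sup>+t. ennreal (indicator {0..} t * t powr (m + 1 - 1) / exp t) \<partial>lborel)"
    by (rule nn_integral_cmult) measurable
  also have "(\<integral>\<^sup>+t. ennreal (indicator {0..} t * t powr (m + 1 - 1) / exp t) \<partial>lborel) = ennreal (Gamma (m + 1))"
    using Gamma_conv_nn_integral_real[of "m + 1"] m by (simp add: Gamma_real_pos less_imp_le)
  finally show ?thesis by (simp add: ennreal_mult[symmetric] top.not_eq_extremum[symmetric] ennreal_mult_eq_top_iff)
qed

context mimo begin

definition "SXg = {(\<lambda>\<omega> i. x i \<omega>) -` A \<inter> space M | A. A \<in> sets (Pi\<^sub>M UNIV (\<lambda>_. borel))}"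

lemma SXg_Pow: "SXg \<subseteq> Pow (space M)" by (auto simp: SXg_def)

lemma x_meas_X: "x i \<in> borel_measurable (sigma (space M) SXg)"
proof (rule measurableI)
  fix A :: "(real^2) set" assume A: "A \<in> sets borel"
  let ?B = "(\<lambda>f. f i) -` A \<inter> space (Pi\<^sub>M (UNIV::nat set) (\<lambda>_. borel))"
  have "?B \<in> sets (Pi\<^sub>M UNIV (\<lambda>_. borel))"
    using measurable_sets[OF measurable_component_singleton[of i UNIV] A] by simp
  moreover have "x i -` A \<inter> space M = (\<lambda>\<omega> i. x i \<omega>) -` ?B \<inter> space M"
    by (auto simp: space_PiM)
  ultimately have "x i -` A \<inter> space M \<in> SXg" unfolding SXg_def by blast
  then show "x i -` A \<inter> space (sigma (space M) SXg) \<in> sets (sigma (space M) SXg)"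
    by (auto simp: sets_measure_of[OF SXg_Pow] space_measure_of[OF SXg_Pow])
qed auto

lemma h_meas_H: "n \<in> {1..N} \<Longrightarrow> h n i \<in> borel_measurable (sigma (space M) Gen_h)"
proof (rule measurableI)
  fix A :: "real set" assume A: "A \<in> sets borel" and n: "n \<in> {1..N}"
  have "h n i -` A \<inter> space M \<in> sigma_sets (space M) Gen_h"
    using A n unfolding Gen_h_def by (intro sigma_sets.Basic) force
  then show "h n i -` A \<inter> space (sigma (space M) Gen_h) \<in> sets (sigma (space M) Gen_h)"
    by (simp add: sets_measure_of[OF Gen_h_Pow] space_measure_of[OF Gen_h_Pow])
qed auto

lemma interf_AE_nonneg:
  assumes ppp: "is_ppp M lam x" and lam: "lam > 0" and a: "\<alpha> > 2" and mI: "mI > 0"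
    and h_distr: "\<And>n i. n \<in> {1..N} \<Longrightarrow> distributed M lborel (h n i) (\<lambda>t. ennreal (gamma_density mI (1/mI) t))"
    and k: "k \<in> {1..N}"
  shows "AE \<omega> in M. 0 \<le> interf d \<alpha> h x k \<omega>"
proof -
  interpret P: ppp_loc M lam x by unfold_locales (use ppp lam in auto)
  have fam[measurable]: "fa \<alpha> \<in> borel_measurable borel" unfolding fa_def by measurable
  have hm[measurable]: "h k i \<in> borel_measurable M" for i using hmeas[OF k] .
  have indXH: "indep_set SX (sigma_sets (space M) Gen_h)"
    by (rule indep_set_mono2[OF x_indep' order_refl SH_sub])
  have ind: "indep_var borel (\<lambda>\<omega>. fa \<alpha> (x i \<omega>)) borel (\<lambda>\<omega>. max 0 (h k i \<omega>))" for i
  proof (rule indep_var_from_sets[OF indXH SX_sa sigma_algebra_sigma_sets[OF Gen_h_Pow]])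
    fix A :: "real set" assume A: "A \<in> sets borel"
    have "(\<lambda>\<omega>. fa \<alpha> (x i \<omega>)) \<in> borel_measurable (sigma (space M) SXg)"
      using x_meas_X[of i] by measurable
    from preimage_in_sigma[OF SXg_Pow this A]
    show "(\<lambda>\<omega>. fa \<alpha> (x i \<omega>)) -` A \<inter> space M \<in> SX" unfolding SX_def SXg_def .
    have "(\<lambda>\<omega>. max 0 (h k i \<omega>)) \<in> borel_measurable (sigma (space M) Gen_h)"
      using h_meas_H[OF k, of i] by measurable
    from preimage_in_sigma[OF Gen_h_Pow this A]
    show "(\<lambda>\<omega>. max 0 (h k i \<omega>)) -` A \<inter> space M \<in> sigma_sets (space M) Gen_h" .
  qed
  define Hm where "Hm = (\<integral>\<^sup>+t. ennreal (gamma_density mI (1/mI) t) * ennreal t \<partial>lborel)"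
  have Hm_fin: "Hm < \<top>" unfolding Hm_def by (rule Eh_fin[OF mI])
  have Eh: "(\<integral>\<^sup>+\<omega>. ennreal (max 0 (h k i \<omega>)) \<partial>M) = Hm" for i
    using distributed_nn_integral[OF h_distr[of k i, OF k], of "\<lambda>t. ennreal t"]
    by (simp add: Hm_def ennreal_max0)
  have fa0: "0 \<le> fa \<alpha> y" for y by (simp add: fa_def)
  have "(\<integral>\<^sup>+\<omega>. (\<Sum>i. ennreal (fa \<alpha> (x i \<omega>) * max 0 (h k i \<omega>))) \<partial>M) =
        (\<Sum>i. (\<integral>\<^sup>+\<omega>. ennreal (fa \<alpha> (x i \<omega>) * max 0 (h k i \<omega>)) \<partial>M))"
    by (rule nn_integral_suminf) measurable
  also have "\<dots> = (\<Sum>i. (\<integral>\<^sup>+\<omega>. ennreal (fa \<alpha> (x i \<omega>)) \<partial>M) * Hm)"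
    by (rule suminf_cong) (simp add: indep_var_nn_integral[OF ind] fa0 Eh Eh[unfolded ennreal_max0])
  also have "\<dots> = (\<Sum>i. (\<integral>\<^sup>+\<omega>. ennreal (fa \<alpha> (x i \<omega>)) \<partial>M)) * Hm"
    by simp
  also have "(\<Sum>i. (\<integral>\<^sup>+\<omega>. ennreal (fa \<alpha> (x i \<omega>)) \<partial>M)) = (\<integral>\<^sup>+\<omega>. (\<Sum>i. ennreal (fa \<alpha> (x i \<omega>))) \<partial>M)"
    by (rule nn_integral_suminf[symmetric]) measurable
  finally have fin: "(\<integral>\<^sup>+\<omega>. (\<Sum>i. ennreal (fa \<alpha> (x i \<omega>) * max 0 (h k i \<omega>))) \<partial>M) \<noteq> \<top>"
    using P.Ef[OF a] Hm_fin by (simp add: ennreal_mult_eq_top_iff top.not_eq_extremum)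
  have AE1: "AE \<omega> in M. (\<Sum>i. ennreal (fa \<alpha> (x i \<omega>) * max 0 (h k i \<omega>))) \<noteq> \<top>"
    using nn_integral_PInf_AE[of "\<lambda>\<omega>. \<Sum>i. ennreal (fa \<alpha> (x i \<omega>) * max 0 (h k i \<omega>))" M] fin by simp
  have AE2: "AE \<omega> in M. \<forall>i. 0 \<le> h k i \<omega>"
    unfolding AE_all_countable
    by (intro allI distributed_AE_nonneg[OF h_distr[OF k]]) (auto simp: gamma_density_def)
  have AE3: "AE \<omega> in M. finite {i. x i \<omega> \<in> cball 0 1}" by (rule P.AE_fin) simp
  show ?thesis
    using AE1 AE2 AE3
  proof eventually_elim
    case (elim \<omega>)
    define F where "F = {i. x i \<omega> \<in> cball 0 1}"
    define a where "a i = h k i \<omega> * norm (x i \<omega>) powr (- \<alpha>)" for i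
    have a0: "0 \<le> a i" for i using elim by (simp add: a_def)
    have le: "ennreal (a i) \<le> ennreal (fa \<alpha> (x i \<omega>) * max 0 (h k i \<omega>)) + (if i \<in> F then ennreal (a i) else 0)" for i
    proof (cases "i \<in> F")
      case False
      then have "1 < norm (x i \<omega>)" by (simp add: F_def)
      then have "a i = fa \<alpha> (x i \<omega>) * max 0 (h k i \<omega>)" using elim by (simp add: a_def fa_def)
      then show ?thesis using False by simp
    qed simp
    have "(\<Sum>i. ennreal (a i)) \<le> (\<Sum>i. ennreal (fa \<alpha> (x i \<omega>) * max 0 (h k i \<omega>)) + (if i \<in> F then ennreal (a i) else 0))"
      by (intro suminf_le le summableI)
    also have "\<dots> = (\<Sum>i. ennreal (fa \<alpha> (x i \<omega>) * max 0 (h k i \<omega>))) + (\<Sum>i. (if i \<in> F then ennreal (a i) else 0))"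
      by (rule suminf_add[symmetric]) (auto intro: summableI)
    also have "(\<Sum>i. (if i \<in> F then ennreal (a i) else 0)) = (\<Sum>i\<in>F. (if i \<in> F then ennreal (a i) else 0))"
      by (rule suminf_finite) (use elim in \<open>auto simp: F_def\<close>)
    also have "(\<Sum>i\<in>F. (if i \<in> F then ennreal (a i) else 0)) = ennreal (\<Sum>i\<in>F. a i)"
      by (simp add: a0 sum_ennreal)
    finally have le2: "(\<Sum>i. ennreal (a i)) \<le> (\<Sum>i. ennreal (fa \<alpha> (x i \<omega>) * max 0 (h k i \<omega>))) + ennreal (\<Sum>i\<in>F. a i)" .
    have "(\<Sum>i. ennreal (fa \<alpha> (x i \<omega>) * max 0 (h k i \<omega>))) + ennreal (\<Sum>i\<in>F. a i) < \<top>"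
      using elim(1) by (simp add: top.not_eq_extremum)
    then have "(\<Sum>i. ennreal (a i)) \<noteq> \<top>" using le2 by (metis top.not_eq_extremum order.strict_trans1)
    then have "summable a" by (intro summable_suminf_not_top a0)
    then have "0 \<le> suminf a" by (intro suminf_nonneg a0)
    moreover have "suminf a = (\<Sum>i. h k i \<omega> * norm (x i \<omega>) powr - \<alpha>)" by (simp add: a_def[abs_def])
    ultimately show ?case unfolding interf_def by simp
  qed
qed

end


lemma AE_gamma_nonneg:
  assumes "prob_space M" "distributed M lborel (X :: 'a \<Rightarrow> real) (\<lambda>t. ennreal (gamma_density k \<theta> t))"
  shows "AE \<omega> in M. 0 \<le> X \<omega>"
  by (rule prob_space.distributed_AE_nonneg[OF assms]) (auto simp: gamma_density_def)

theorem mainTheorem9: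
  fixes M :: "'a measure" and N :: nat and lam d \<alpha> mI :: real and mD :: nat
    and x :: "nat \<Rightarrow> 'a \<Rightarrow> real^2"
    and g :: "nat \<Rightarrow> 'a \<Rightarrow> real" and h :: "nat \<Rightarrow> nat \<Rightarrow> 'a \<Rightarrow> real"
  assumes "prob_space M"
    and "N \<ge> 1" and "lam > 0" and "d > 0" and "\<alpha> > 2" and "mD \<ge> 1" and "mI > 0"
    and ppp: "is_ppp M lam x"
    and g_distr: "\<And>n. n \<in> {1..N} \<Longrightarrow>
        distributed M lborel (g n) (\<lambda>t. ennreal (gamma_density (real mD) (1 / real mD) t))"
    and h_distr: "\<And>n i. n \<in> {1..N} \<Longrightarrow>
        distributed M lborel (h n i) (\<lambda>t. ennreal (gamma_density mI (1 / mI) t))"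
    and gh_indep: "prob_space.indep_vars M (\<lambda>_. borel)
        (\<lambda>k \<omega>. case k of Inl n \<Rightarrow> g n \<omega> | Inr (n, i) \<Rightarrow> h n i \<omega>)
        (Inl ` {1..N} \<union> Inr ` ({1..N} \<times> UNIV))"
    and x_indep: "prob_space.indep_set M
        (sigma_sets (space M) {(\<lambda>\<omega> i. x i \<omega>) -` A \<inter> space M | A.
            A \<in> sets (Pi\<^sub>M UNIV (\<lambda>_. borel))})
        (sigma_sets (space M) {(\<lambda>\<omega>. restrict (\<lambda>k. case k of Inl n \<Rightarrow> g n \<omega> | Inr (n, i) \<Rightarrow> h n i \<omega>)
                 (Inl ` {1..N} \<union> Inr ` ({1..N} \<times> UNIV))) -` A \<inter> space M | A.
            A \<in> sets (Pi\<^sub>M (Inl ` {1..N} \<union> Inr ` ({1..N} \<times> UNIV)) (\<lambda>_. borel))})"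
  defines "ratio \<equiv>
      (\<integral>\<omega>. (\<Sum>n=1..N. g n \<omega> / interf d \<alpha> h x n \<omega>) \<partial>M) /
      (\<integral>\<omega>. Max ((\<lambda>n. g n \<omega> / interf d \<alpha> h x n \<omega>) ` {1..N}) \<partial>M)"
  shows "ratio \<le> real N * (\<integral>\<omega>. g 1 \<omega> \<partial>M) / (\<integral>\<omega>. Max ((\<lambda>n. g n \<omega>) ` {1..N}) \<partial>M)
         \<and> (mD = 1 \<and> mI = 1 \<longrightarrow> ratio \<le> real N / (\<Sum>n=1..N. 1 / real n))"
proof -
  interpret prob_space M by fact
  have xm: "\<And>i. x i \<in> borel_measurable M" using ppp by (simp add: is_ppp_def)
  interpret mimo M N x g h
    by unfold_locales (use assms(2) xm gh_indep x_indep in auto)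
  interpret mimo2 M N x g h "\<lambda>t. ennreal (gamma_density (real mD) (1 / real mD) t)"
    by unfold_locales (rule g_distr)
  have gpos: "AE \<omega> in M. \<forall>n\<in>{1..N}. 0 \<le> g n \<omega>"
    by (subst AE_finite_all) (auto intro: AE_gamma_nonneg[OF assms(1) g_distr])
  have Ipos: "AE \<omega> in M. \<forall>k\<in>{1..N}. 0 \<le> interf d \<alpha> h x k \<omega>"
    by (subst AE_finite_all) (auto intro!: interf_AE_nonneg[OF ppp assms(3) assms(5) assms(7) h_distr])
  interpret mimo3 M N x g h "\<lambda>t. ennreal (gamma_density (real mD) (1 / real mD) t)" d \<alpha>
    by unfold_locales (use gpos Ipos G0_gamma[OF assms(6)] in auto)
  have P1: "ratio \<le> real N * (\<integral>\<omega>. g 1 \<omega> \<partial>M) / (\<integral>\<omega>. Max ((\<lambda>n. g n \<omega>) ` {1..N}) \<partial>M)"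
    unfolding ratio_def by (rule part1)
  have G1: "(\<integral>\<omega>. g 1 \<omega> \<partial>M) = 1"
  proof -
    have 1: "1 \<in> {1..N}" using assms(2) by auto
    have "(\<integral>\<omega>. g 1 \<omega> \<partial>M) = enn2real (\<integral>\<^sup>+\<omega>. ennreal (g 1 \<omega>) \<partial>M)"
      by (rule integral_eq_nn_integral) (use gmeas[OF 1] gpos 1 in \<open>auto elim: AE_mp\<close>)
    then show ?thesis using Eg[OF 1] by simp
  qed
  have Gm: "(\<integral>\<omega>. Max ((\<lambda>n. g n \<omega>) ` {1..N}) \<partial>M) = enn2real GM"
    unfolding GM_def
  proof (rule integral_eq_nn_integral)
    show "(\<lambda>\<omega>. Max ((\<lambda>n. g n \<omega>) ` {1..N})) \<in> borel_measurable M"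
      by (rule borel_measurable_Max) (use gmeas in auto)
    show "AE \<omega> in M. 0 \<le> Max ((\<lambda>n. g n \<omega>) ` {1..N})"
      using gpos
    proof eventually_elim
      case (elim \<omega>)
      have 1: "1 \<in> {1..N}" using assms(2) by auto
      have "0 \<le> g 1 \<omega>" using elim 1 by auto
      also have "\<dots> \<le> Max ((\<lambda>n. g n \<omega>) ` {1..N})" using 1 by (intro Max_ge) auto
      finally show ?case .
    qed
  qed
  show ?thesis
  proof (intro conjI impI)
    show "ratio \<le> real N * (\<integral>\<omega>. g 1 \<omega> \<partial>M) / (\<integral>\<omega>. Max ((\<lambda>n. g n \<omega>) ` {1..N}) \<partial>M)" by (rule P1)
    assume m: "mD = 1 \<and> mI = 1"
    have "GM = ennreal (\<Sum>n=1..N. 1 / real n)"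
      unfolding GM_def by (rule GM_exp) (use m gpos in auto)
    then have "enn2real GM = (\<Sum>n=1..N. 1 / real n)" by (simp add: sum_nonneg)
    then show "ratio \<le> real N / (\<Sum>n=1..N. 1 / real n)" using P1 G1 Gm by simp
  qed
qed

end
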